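(* Let $\Lambda$ be a net of quadrics in $\mathbb{P}^5$. For each $i\in\{1,\dots,5\}$, $\Lambda$ fails to be stable with respect to some one-parameter subgroup of numerical type $\rho_i$ if and only if there is a complete flag $F_0\subset F_1\subset F_2\subset F_3\subset F_4\subset\mathbb{P}^5$ of linear subspaces ($\dim F_j=j$) such that the corresponding condition holds: (1) $\rho_1=(1,1,1,1,1,-5)$: some element of $\Lambda$ contains $F_4$. (2) $\rho_2=(1,1,1,1,-2,-2)$: (a) some pencil in $\Lambda$ contains $F_3$, or (b) some element of $\Lambda$ is singular along $F_3$. (3) $\rho_3=(1,1,1,-1,-1,-1)$: (a) $\Lambda$ contains $F_2$, or (b) some pencil in $\Lambda$ contains $F_2$ and an element of that pencil is singular along $F_2$. (4) $\rho_4=(2,2,-1,-1,-1,-1)$: (a) $\Lambda$ contains $F_1$ and some element of $\Lambda$ is singular along $F_1$, or (b) some pencil in $\Lambda$ is singular along $F_1$. (5) $\rho_5=(5,-1,-1,-1,-1,-1)$: $\Lambda$ contains $F_0$ and some pencil in $\Lambda$ is singular at $F_0$.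
   Context: A net of quadrics in $\mathbb{P}^5$ is a $3$-dimensional subspace $\Lambda$ of the space $W$ of quadratic forms on $\mathbb{C}^6$, viewed in $Gr(3,W)\subset\mathbb{P}(\bigwedge^3W)$ with $SL(6)$-action. A 1-PS of numerical type $(a_0,\dots,a_5)$ acts diagonally on some basis $x_0,\dots,x_5$ of linear forms with these weights; the weight of $x_ix_j$ is $a_i+a_j$, that of a Plücker coordinate $x_{i_1}x_{j_1}\wedge x_{i_2}x_{j_2}\wedge x_{i_3}x_{j_3}$ is the sum of monomial weights; $\Lambda$ is stable w.r.t. $\rho$ if some Plücker coordinate not vanishing on $\Lambda$ has positive $\rho$-weight. A pencil in $\Lambda$ is a $2$-dimensional subspace; "a pencil (resp. $\Lambda$) contains/is singular along $F$" means every quadric in it contains $F$ / is singular along $F$. (The flag corresponds to a basis via $F_j=\{x_{j+1}=\dots=x_5=0\}$.) *)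

theory Defs
  imports Complex_Main "Jordan_Normal_Form.Determinant"
begin

definition quad :: "complex mat \<Rightarrow> complex vec \<Rightarrow> complex" where
  "quad A v = v \<bullet> (A *\<^sub>v v)"

definition sym6 :: "complex mat \<Rightarrow> bool" where
  "sym6 A \<longleftrightarrow> A \<in> carrier_mat 6 6 \<and> transpose_mat A = A"

(* A basis of C^6 is given by the columns of an invertible matrix M; the dual basis
   of linear forms x_0..x_5 are the coordinates w.r.t. it (v = M x).
   F_j = {x_(j+1) = ... = x_5 = 0} (as linear subspace of C^6, i.e. affine cone). *)
definition flagsp :: "complex mat \<Rightarrow> nat \<Rightarrow> complex vec set" where
  "flagsp M j = {M *\<^sub>v x | x. x \<in> carrier_vec 6 \<and> (\<forall>k. j < k \<and> k < 6 \<longrightarrow> x $ k = 0)}"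

definition contains :: "complex mat \<Rightarrow> complex vec set \<Rightarrow> bool" where
  "contains A F \<longleftrightarrow> (\<forall>v\<in>F. quad A v = 0)"

(* singular along F: the gradient 2 A v vanishes at every point of F *)
definition sing_along :: "complex mat \<Rightarrow> complex vec set \<Rightarrow> bool" where
  "sing_along A F \<longleftrightarrow> (\<forall>v\<in>F. A *\<^sub>v v = 0\<^sub>v 6)"

(* coefficient of the monomial x_i x_j (i \<le> j) of q_A in the coordinates x = M^-1 v *)
definition qcoeff :: "complex mat \<Rightarrow> complex mat \<Rightarrow> nat \<times> nat \<Rightarrow> complex" where
  "qcoeff M A m = (case m of (i, j) \<Rightarrow>
     (if i = j then 1 else 2) * (transpose_mat M * A * M) $$ (i, j))"

definition monomials :: "(nat \<times> nat) set" where
  "monomials = {(i, j). i \<le> j \<and> j < 6}"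

definition mweight :: "int list \<Rightarrow> nat \<times> nat \<Rightarrow> int" where
  "mweight a m = (case m of (i, j) \<Rightarrow> a ! i + a ! j)"

(* Pluecker coordinate x_m1 \<and> x_m2 \<and> x_m3 of Q1 \<and> Q2 \<and> Q3 in the basis M *)
definition plucker :: "complex mat \<Rightarrow> complex mat \<Rightarrow> complex mat \<Rightarrow> complex mat
    \<Rightarrow> nat \<times> nat \<Rightarrow> nat \<times> nat \<Rightarrow> nat \<times> nat \<Rightarrow> complex" where
  "plucker M Q1 Q2 Q3 m1 m2 m3 =
     det (mat 3 3 (\<lambda>(k, l). qcoeff M ([Q1, Q2, Q3] ! k) ([m1, m2, m3] ! l)))"

(* stable w.r.t. the 1-PS with weights a acting diagonally on the basis M *)
definition stable_wrt :: "int list \<Rightarrow> complex mat \<Rightarrow> complex mat \<Rightarrow> complex mat \<Rightarrow> complex mat \<Rightarrow> bool" where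
  "stable_wrt a M Q1 Q2 Q3 \<longleftrightarrow>
     (\<exists>m1\<in>monomials. \<exists>m2\<in>monomials. \<exists>m3\<in>monomials. distinct [m1, m2, m3] \<and>
        plucker M Q1 Q2 Q3 m1 m2 m3 \<noteq> 0 \<and>
        mweight a m1 + mweight a m2 + mweight a m3 > 0)"

definition not_stable_some_1PS :: "int list \<Rightarrow> complex mat \<Rightarrow> complex mat \<Rightarrow> complex mat \<Rightarrow> bool" where
  "not_stable_some_1PS a Q1 Q2 Q3 \<longleftrightarrow>
     (\<exists>M \<in> carrier_mat 6 6. invertible_mat M \<and> \<not> stable_wrt a M Q1 Q2 Q3)"

definition span3 :: "complex mat \<Rightarrow> complex mat \<Rightarrow> complex mat \<Rightarrow> complex mat set" where
  "span3 Q1 Q2 Q3 = {a \<cdot>\<^sub>m Q1 + b \<cdot>\<^sub>m Q2 + c \<cdot>\<^sub>m Q3 | a b c. True}"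

definition indep3 :: "complex mat \<Rightarrow> complex mat \<Rightarrow> complex mat \<Rightarrow> bool" where
  "indep3 Q1 Q2 Q3 \<longleftrightarrow> (\<forall>a b c. a \<cdot>\<^sub>m Q1 + b \<cdot>\<^sub>m Q2 + c \<cdot>\<^sub>m Q3 = 0\<^sub>m 6 6
      \<longrightarrow> a = 0 \<and> b = 0 \<and> c = 0)"

definition span2 :: "complex mat \<Rightarrow> complex mat \<Rightarrow> complex mat set" where
  "span2 P1 P2 = {a \<cdot>\<^sub>m P1 + b \<cdot>\<^sub>m P2 | a b. True}"

definition pencil_in :: "complex mat set \<Rightarrow> complex mat set \<Rightarrow> bool" where
  "pencil_in \<Lambda> P \<longleftrightarrow> (\<exists>P1 P2. P1 \<in> \<Lambda> \<and> P2 \<in> \<Lambda> \<and>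
      (\<forall>a b. a \<cdot>\<^sub>m P1 + b \<cdot>\<^sub>m P2 = 0\<^sub>m 6 6 \<longrightarrow> a = 0 \<and> b = 0) \<and> P = span2 P1 P2)"

definition elem :: "complex mat \<Rightarrow> complex mat set \<Rightarrow> bool" where
  "elem A S \<longleftrightarrow> A \<in> S \<and> A \<noteq> 0\<^sub>m 6 6"

definition has_flag :: "(((nat \<Rightarrow> complex vec set)) \<Rightarrow> bool) \<Rightarrow> bool" where
  "has_flag C \<longleftrightarrow> (\<exists>M \<in> carrier_mat 6 6. invertible_mat M \<and> C (flagsp M))"

end

theory Submission
  imports Defs
begin


type_synonym v3 = "nat \<Rightarrow> complex"

definition dot :: "v3 \<Rightarrow> v3 \<Rightarrow> complex" where
  "dot n u = n 0 * u 0 + n 1 * u 1 + n 2 * u 2"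
definition cross :: "v3 \<Rightarrow> v3 \<Rightarrow> v3" where
  "cross u v = (\<lambda>i. if i = 0 then u 1 * v 2 - u 2 * v 1 else if i = 1 then u 2 * v 0 - u 0 * v 2
      else u 0 * v 1 - u 1 * v 0)"
definition det3v :: "v3 \<Rightarrow> v3 \<Rightarrow> v3 \<Rightarrow> complex" where
  "det3v u v w = dot u (cross v w)"
definition nz :: "v3 \<Rightarrow> bool" where
  "nz u \<longleftrightarrow> u 0 \<noteq> 0 \<or> u 1 \<noteq> 0 \<or> u 2 \<noteq> 0"
definition ev :: "nat \<Rightarrow> v3" where "ev i = (\<lambda>k. if k = i then 1 else 0)"
definition lc :: "complex \<Rightarrow> v3 \<Rightarrow> complex \<Rightarrow> v3 \<Rightarrow> v3" where
  "lc a n b n' = (\<lambda>i. a * n i + b * n' i)"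

lemma dot_cross1[simp]: "dot u (cross u v) = 0" "dot v (cross u v) = 0"
  by (simp_all add: dot_def cross_def algebra_simps)

lemma det3v_rot: "det3v u v w = dot w (cross u v)" "det3v u v w = dot v (cross w u)"
  by (simp_all add: det3v_def dot_def cross_def algebra_simps)

lemma det3v_expand: "det3v u v w * n i = dot n u * cross v w i + dot n v * cross w u i + dot n w * cross u v i"
  if "i = 0 \<or> i = 1 \<or> i = 2"
  using that by (auto simp: det3v_def dot_def cross_def algebra_simps)

lemma cross_cross1: "cross (cross n n') u i = n' i * dot n u - n i * dot n' u"
  if "i = 0 \<or> i = 1 \<or> i = 2"
  using that by (auto simp: dot_def cross_def algebra_simps)

lemma cross_cross2: "cross w (cross u v) i = u i * dot w v - v i * dot w u"
  if "i = 0 \<or> i = 1 \<or> i = 2"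
  using that by (auto simp: dot_def cross_def algebra_simps)

lemma dot_lc: "dot (lc a n b n') u = a * dot n u + b * dot n' u"
  by (simp add: dot_def lc_def algebra_simps)

lemma nz_cross_anti: "nz (cross v u) \<longleftrightarrow> nz (cross u v)"
  by (auto simp: nz_def cross_def) (simp_all add: algebra_simps)

lemma ann_det0: assumes "nz n" "dot n u = 0" "dot n v = 0" "dot n w = 0"
  shows "det3v u v w = 0"
proof -
  have "det3v u v w * n i = 0" if "i = 0 \<or> i = 1 \<or> i = 2" for i
    using det3v_expand[OF that, of u v w n] assms by simp
  then show ?thesis using assms(1) unfolding nz_def by fastforce
qed

lemma par: assumes "nz u" "\<not> nz (cross u v)"
  shows "\<exists>l. v 0 = l * u 0 \<and> v 1 = l * u 1 \<and> v 2 = l * u 2"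
proof -
  have e: "u 1 * v 2 = u 2 * v 1" "u 2 * v 0 = u 0 * v 2" "u 0 * v 1 = u 1 * v 0"
    using assms(2) by (auto simp: nz_def cross_def)
  show ?thesis
  proof (cases "u 0 = 0")
    case False
    show ?thesis by (rule exI[of _ "v 0 / u 0"]) (use False e in \<open>auto simp: field_simps\<close>)
  next
    case z0: True
    show ?thesis
    proof (cases "u 1 = 0")
      case False
      show ?thesis by (rule exI[of _ "v 1 / u 1"]) (use False z0 e in \<open>auto simp: field_simps\<close>)
    next
      case True
      with z0 assms(1) have "u 2 \<noteq> 0" by (auto simp: nz_def)
      show ?thesis by (rule exI[of _ "v 2 / u 2"]) (use \<open>u 2 \<noteq> 0\<close> True z0 e in \<open>auto simp: field_simps\<close>)
    qed
  qed
qed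

lemma par_dot: assumes "nz u" "\<not> nz (cross u v)" "dot n u = 0" shows "dot n v = 0"
proof -
  obtain l where "v 0 = l * u 0 \<and> v 1 = l * u 1 \<and> v 2 = l * u 2" using par[OF assms(1,2)] by blast
  then have "dot n v = l * dot n u" by (simp add: dot_def algebra_simps)
  with assms(3) show ?thesis by simp
qed

lemma par_trans: assumes "nz u" "\<not> nz (cross u x)" "\<not> nz (cross u y)" shows "\<not> nz (cross x y)"
proof -
  obtain l where l: "x 0 = l * u 0 \<and> x 1 = l * u 1 \<and> x 2 = l * u 2" using par[OF assms(1,2)] by blast
  obtain k where k: "y 0 = k * u 0 \<and> y 1 = k * u 1 \<and> y 2 = k * u 2" using par[OF assms(1,3)] by blast
  show ?thesis using l k by (simp add: nz_def cross_def algebra_simps)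
qed

lemma perp_ex: assumes "nz u" shows "\<exists>i. nz (cross u (ev i))"
  using assms by (auto simp: nz_def cross_def ev_def)

lemma perp2: assumes "nz u" "nz w" "dot w u = 0"
  shows "\<exists>w'. dot w' u = 0 \<and> nz (cross w w')"
proof -
  obtain i where i: "(i = 0 \<or> i = 1 \<or> i = 2) \<and> w i \<noteq> 0" using assms(2) by (auto simp: nz_def)
  let ?w' = "cross u (ev i)"
  have dw: "dot w (ev i) = w i" using i by (auto simp: dot_def ev_def)
  have "cross w ?w' j = w i * u j" if "j = 0 \<or> j = 1 \<or> j = 2" for j
    using cross_cross2[OF that, of w u "ev i"] assms(3) dw by simp
  then have "nz (cross w ?w')" using assms(1) i by (auto simp: nz_def)
  moreover have "dot ?w' u = 0" by (simp add: dot_def cross_def algebra_simps)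
  ultimately show ?thesis by blast
qed

lemma det_cross0: assumes "\<not> nz (cross u v)"
  shows "det3v u v w = 0" "det3v w u v = 0" "det3v u w v = 0"
    "det3v v u w = 0" "det3v w v u = 0" "det3v v w u = 0"
proof -
  have c: "cross u v 0 = 0" "cross u v 1 = 0" "cross u v 2 = 0" using assms by (auto simp: nz_def)
  have e: "det3v u v w = w 0 * cross u v 0 + w 1 * cross u v 1 + w 2 * cross u v 2"
    "det3v w u v = w 0 * cross u v 0 + w 1 * cross u v 1 + w 2 * cross u v 2"
    "det3v u w v = - (w 0 * cross u v 0 + w 1 * cross u v 1 + w 2 * cross u v 2)"
    "det3v v u w = - (w 0 * cross u v 0 + w 1 * cross u v 1 + w 2 * cross u v 2)"
    "det3v w v u = - (w 0 * cross u v 0 + w 1 * cross u v 1 + w 2 * cross u v 2)"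
    "det3v v w u = w 0 * cross u v 0 + w 1 * cross u v 1 + w 2 * cross u v 2"
    by (simp_all add: det3v_def dot_def cross_def algebra_simps)
  show "det3v u v w = 0" "det3v w u v = 0" "det3v u w v = 0"
    "det3v v u w = 0" "det3v w v u = 0" "det3v v w u = 0" unfolding e c by simp_all
qed


lemma dot_comm: "dot n u = dot u n" by (simp add: dot_def algebra_simps)

lemma zero_cross: "\<not> nz u \<Longrightarrow> \<not> nz (cross u v)" "\<not> nz u \<Longrightarrow> \<not> nz (cross v u)"
  by (auto simp: nz_def cross_def)

lemma det_zero_col: assumes "\<not> nz u"
  shows "det3v u v w = 0" "det3v v u w = 0" "det3v v w u = 0"
  using det_cross0[OF zero_cross(1)[OF assms, of v]] det_cross0[OF zero_cross(1)[OF assms, of w]]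
  by auto

definition ann :: "('m \<Rightarrow> v3) \<Rightarrow> v3 \<Rightarrow> 'm set \<Rightarrow> bool" where
  "ann g n S \<longleftrightarrow> (\<forall>m\<in>S. dot n (g m) = 0)"
definition ExV :: "('m \<Rightarrow> v3) \<Rightarrow> 'm set \<Rightarrow> bool" where
  "ExV g S \<longleftrightarrow> (\<exists>n. nz n \<and> ann g n S)"
definition Pen :: "('m \<Rightarrow> v3) \<Rightarrow> 'm set \<Rightarrow> bool" where
  "Pen g S \<longleftrightarrow> (\<exists>n n'. nz (cross n n') \<and> ann g n S \<and> ann g n' S)"
definition Zr :: "('m \<Rightarrow> v3) \<Rightarrow> 'm set \<Rightarrow> bool" where
  "Zr g S \<longleftrightarrow> (\<forall>m\<in>S. \<not> nz (g m))"
definition Full :: "('m \<Rightarrow> v3) \<Rightarrow> 'm set \<Rightarrow> bool" where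
  "Full g U \<longleftrightarrow> (\<forall>n. nz n \<longrightarrow> \<not> ann g n U)"
definition Pen3 :: "('m \<Rightarrow> v3) \<Rightarrow> 'm set \<Rightarrow> 'm set \<Rightarrow> bool" where
  "Pen3 g S T \<longleftrightarrow> (\<exists>n n'. nz (cross n n') \<and> ann g n S \<and> ann g n' S \<and>
     (\<exists>a b. nz (lc a n b n') \<and> ann g (lc a n b n') T))"
definition NS :: "('m \<Rightarrow> v3) \<Rightarrow> 'm set \<Rightarrow> ('m \<Rightarrow> int) \<Rightarrow> bool" where
  "NS g U w \<longleftrightarrow> (\<forall>x\<in>U. \<forall>y\<in>U. \<forall>z\<in>U. w x + w y + w z > 0 \<longrightarrow> det3v (g x) (g y) (g z) = 0)"

lemma K1: "(\<forall>x\<in>S. \<forall>y\<in>S. \<forall>z\<in>S. det3v (g x) (g y) (g z) = 0) \<longleftrightarrow> ExV g S"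
proof
  assume H: "\<forall>x\<in>S. \<forall>y\<in>S. \<forall>z\<in>S. det3v (g x) (g y) (g z) = 0"
  show "ExV g S"
  proof (cases "\<exists>x\<in>S. \<exists>y\<in>S. nz (cross (g x) (g y))")
    case True
    then obtain x y where xy: "x \<in> S" "y \<in> S" "nz (cross (g x) (g y))" by blast
    have "ann g (cross (g x) (g y)) S"
      unfolding ann_def using H xy by (metis det3v_rot(1) dot_comm)
    with xy show ?thesis unfolding ExV_def by blast
  next
    case F1: False
    show ?thesis
    proof (cases "\<exists>x\<in>S. nz (g x)")
      case True
      then obtain x where x: "x \<in> S" "nz (g x)" by blast
      then obtain i where i: "nz (cross (g x) (ev i))" using perp_ex by blast
      have "dot (cross (g x) (ev i)) (g x) = 0" by (simp add: dot_comm)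
      then have "ann g (cross (g x) (ev i)) S"
        unfolding ann_def using par_dot[OF x(2)] F1 x(1) by blast
      with i show ?thesis unfolding ExV_def by blast
    next
      case False
      have "nz (ev 0)" by (simp add: nz_def ev_def)
      moreover have "ann g (ev 0) S" using False by (auto simp: ann_def dot_def ev_def nz_def)
      ultimately show ?thesis unfolding ExV_def by blast
    qed
  qed
next
  assume "ExV g S"
  then obtain n where "nz n" "ann g n S" unfolding ExV_def by blast
  then show "\<forall>x\<in>S. \<forall>y\<in>S. \<forall>z\<in>S. det3v (g x) (g y) (g z) = 0"
    unfolding ann_def using ann_det0 by blast
qed

lemma K2: "Pen g S \<longleftrightarrow> (\<forall>x\<in>S. \<forall>y\<in>S. \<not> nz (cross (g x) (g y)))"
proof
  assume "Pen g S"
  then obtain n n' where nn: "nz (cross n n')" "ann g n S" "ann g n' S" unfolding Pen_def by blast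
  have c: "\<not> nz (cross (cross n n') (g x))" if "x \<in> S" for x
  proof -
    have "cross (cross n n') (g x) j = 0" if "j = 0 \<or> j = 1 \<or> j = 2" for j
      using cross_cross1[OF that, of n n' "g x"] nn \<open>x \<in> S\<close> by (simp add: ann_def)
    then show ?thesis by (simp add: nz_def)
  qed
  show "\<forall>x\<in>S. \<forall>y\<in>S. \<not> nz (cross (g x) (g y))"
    using par_trans[OF nn(1)] c by blast
next
  assume H: "\<forall>x\<in>S. \<forall>y\<in>S. \<not> nz (cross (g x) (g y))"
  show "Pen g S"
  proof (cases "\<exists>x\<in>S. nz (g x)")
    case True
    then obtain x where x: "x \<in> S" "nz (g x)" by blast
    then obtain i where i: "nz (cross (g x) (ev i))" using perp_ex by blast
    have d: "dot (cross (g x) (ev i)) (g x) = 0" by (simp add: dot_comm)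
    obtain w' where w': "dot w' (g x) = 0" "nz (cross (cross (g x) (ev i)) w')"
      using perp2[OF x(2) _ d] i nz_def by (metis i)
    have "ann g (cross (g x) (ev i)) S" "ann g w' S"
      unfolding ann_def using par_dot[OF x(2)] H x(1) d w'(1) by blast+
    with w' show ?thesis unfolding Pen_def by blast
  next
    case False
    have "nz (cross (ev 0) (ev 1))" by (simp add: nz_def ev_def cross_def)
    moreover have "ann g (ev 0) S" "ann g (ev 1) S" using False by (auto simp: ann_def dot_def ev_def nz_def)
    ultimately show ?thesis unfolding Pen_def by blast
  qed
qed

lemma fullpair: assumes "Full g U" "\<forall>z\<in>U. det3v u v (g z) = 0" shows "\<not> nz (cross u v)"
proof -
  have "ann g (cross u v) U" using assms(2) unfolding ann_def by (metis det3v_rot(1) dot_comm)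
  then show ?thesis using assms(1) unfolding Full_def by blast
qed

lemma fullzero: assumes "Full g U" "\<forall>x\<in>U. \<forall>z\<in>U. det3v u (g x) (g z) = 0" shows "\<not> nz u"
proof
  assume u: "nz u"
  have c: "\<not> nz (cross u (g x))" if "x \<in> U" for x using fullpair[OF assms(1)] assms(2) that by blast
  obtain i where i: "nz (cross u (ev i))" using perp_ex[OF u] by blast
  have d: "dot (cross u (ev i)) u = 0" by (simp add: dot_comm)
  have "ann g (cross u (ev i)) U" unfolding ann_def using par_dot[OF u c d] by blast
  then show False using assms(1) i unfolding Full_def by blast
qed


lemma det_zero_any: "\<not> nz (g x) \<or> \<not> nz (g y) \<or> \<not> nz (g z) \<Longrightarrow> det3v (g x) (g y) (g z) = 0"
  using det_zero_col by blast

lemma ZrD: "Zr g S \<Longrightarrow> m \<in> S \<Longrightarrow> \<not> nz (g m)" unfolding Zr_def by blast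

lemma NSD: "NS g U w \<Longrightarrow> x \<in> U \<Longrightarrow> y \<in> U \<Longrightarrow> z \<in> U \<Longrightarrow> 0 < w x + w y + w z \<Longrightarrow> det3v (g x) (g y) (g z) = 0"
  unfolding NS_def by blast

lemma case1: assumes W: "\<forall>m\<in>U. w m = 2 \<or> w m = -4 \<or> w m = -10"
  shows "NS g U w \<longleftrightarrow> ExV g {m\<in>U. w m = 2}"
proof -
  have "NS g U w \<longleftrightarrow> (\<forall>x\<in>{m\<in>U. w m = 2}. \<forall>y\<in>{m\<in>U. w m = 2}. \<forall>z\<in>{m\<in>U. w m = 2}.
      det3v (g x) (g y) (g z) = 0)"
    unfolding NS_def
  proof (intro iffI ballI impI)
    fix x y z assume H: "\<forall>x\<in>U. \<forall>y\<in>U. \<forall>z\<in>U. 0 < w x + w y + w z \<longrightarrow> det3v (g x) (g y) (g z) = 0"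
      and "x \<in> {m \<in> U. w m = 2}" "y \<in> {m \<in> U. w m = 2}" "z \<in> {m \<in> U. w m = 2}"
    then show "det3v (g x) (g y) (g z) = 0" by auto
  next
    fix x y z assume H: "\<forall>x\<in>{m \<in> U. w m = 2}. \<forall>y\<in>{m \<in> U. w m = 2}. \<forall>z\<in>{m \<in> U. w m = 2}. det3v (g x) (g y) (g z) = 0"
      and xyz: "x \<in> U" "y \<in> U" "z \<in> U" "0 < w x + w y + w z"
    moreover have "w x = 2 \<or> w x = -4 \<or> w x = -10" "w y = 2 \<or> w y = -4 \<or> w y = -10"
      "w z = 2 \<or> w z = -4 \<or> w z = -10" using W xyz by auto
    ultimately have "w x = 2" "w y = 2" "w z = 2" by auto
    then show "det3v (g x) (g y) (g z) = 0" using H xyz by auto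
  qed
  then show ?thesis by (simp only: K1)
qed

lemma case2: assumes W: "\<forall>m\<in>U. w m = 2 \<or> w m = -1 \<or> w m = -4"
  shows "NS g U w \<longleftrightarrow> Pen g {m\<in>U. w m = 2} \<or> ExV g {m\<in>U. -1 \<le> w m}"
proof
  assume H: "NS g U w"
  show "Pen g {m\<in>U. w m = 2} \<or> ExV g {m\<in>U. -1 \<le> w m}"
  proof (cases "\<exists>a\<in>{m\<in>U. w m = 2}. \<exists>b\<in>{m\<in>U. w m = 2}. nz (cross (g a) (g b))")
    case True
    then obtain a b where ab: "a \<in> U" "b \<in> U" "w a = 2" "w b = 2" "nz (cross (g a) (g b))" by blast
    have "ann g (cross (g a) (g b)) {m\<in>U. -1 \<le> w m}"
      unfolding ann_def
    proof
      fix z assume "z \<in> {m\<in>U. -1 \<le> w m}"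
      then have "det3v (g a) (g b) (g z) = 0" using NSD[OF H] ab by simp
      then show "dot (cross (g a) (g b)) (g z) = 0" by (metis det3v_rot(1) dot_comm)
    qed
    with ab show ?thesis unfolding ExV_def by blast
  next
    case False
    have "Pen g {m\<in>U. w m = 2}" unfolding K2 using False by blast
    then show ?thesis ..
  qed
next
  assume "Pen g {m\<in>U. w m = 2} \<or> ExV g {m\<in>U. -1 \<le> w m}"
  then show "NS g U w"
  proof
    assume "Pen g {m\<in>U. w m = 2}"
    then have C: "\<And>a b. a \<in> U \<Longrightarrow> b \<in> U \<Longrightarrow> w a = 2 \<Longrightarrow> w b = 2 \<Longrightarrow> \<not> nz (cross (g a) (g b))"
      unfolding K2 by blast
    show "NS g U w" unfolding NS_def
    proof (intro ballI impI)
      fix x y z assume xyz: "x \<in> U" "y \<in> U" "z \<in> U" "0 < w x + w y + w z"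
      have "w x = 2 \<or> w x = -1 \<or> w x = -4" "w y = 2 \<or> w y = -1 \<or> w y = -4"
        "w z = 2 \<or> w z = -1 \<or> w z = -4" using W xyz by auto
      then have "w x = 2 \<and> w y = 2 \<or> w x = 2 \<and> w z = 2 \<or> w y = 2 \<and> w z = 2"
        using xyz(4) by auto
      then show "det3v (g x) (g y) (g z) = 0"
      proof (elim disjE conjE)
        assume "w x = 2" "w y = 2" then show ?thesis using det_cross0(1)[OF C[OF xyz(1,2)]] by simp
      next
        assume "w x = 2" "w z = 2" then show ?thesis using det_cross0(3)[OF C[OF xyz(1,3)]] by simp
      next
        assume "w y = 2" "w z = 2" then show ?thesis using det_cross0(2)[OF C[OF xyz(2,3)]] by simp
      qed
    qed
  next
    assume "ExV g {m\<in>U. -1 \<le> w m}"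
    then have C: "\<forall>x\<in>{m\<in>U. -1 \<le> w m}. \<forall>y\<in>{m\<in>U. -1 \<le> w m}. \<forall>z\<in>{m\<in>U. -1 \<le> w m}. det3v (g x) (g y) (g z) = 0"
      unfolding K1[symmetric] by blast
    show "NS g U w" unfolding NS_def
    proof (intro ballI impI)
      fix x y z assume xyz: "x \<in> U" "y \<in> U" "z \<in> U" "0 < w x + w y + w z"
      have "w x = 2 \<or> w x = -1 \<or> w x = -4" "w y = 2 \<or> w y = -1 \<or> w y = -4"
        "w z = 2 \<or> w z = -1 \<or> w z = -4" using W xyz by auto
      then have "-1 \<le> w x" "-1 \<le> w y" "-1 \<le> w z" using xyz(4) by auto
      then show "det3v (g x) (g y) (g z) = 0" using C xyz(1-3) by simp
    qed
  qed
qed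


lemma case3: assumes W: "\<forall>m\<in>U. w m = 2 \<or> w m = 0 \<or> w m = -2" and F: "Full g U"
  shows "NS g U w \<longleftrightarrow> Zr g {m\<in>U. w m = 2} \<or> Pen3 g {m\<in>U. w m = 2} {m\<in>U. 0 \<le> w m}"
proof
  assume H: "NS g U w"
  have CA: "\<not> nz (cross (g a) (g b))" if "a \<in> U" "b \<in> U" "w a = 2" "w b = 2" for a b
  proof (rule fullpair[OF F], rule ballI)
    fix z assume "z \<in> U"
    then have "w z = 2 \<or> w z = 0 \<or> w z = -2" using W by auto
    then show "det3v (g a) (g b) (g z) = 0" using H that \<open>z \<in> U\<close> unfolding NS_def by auto
  qed
  show "Zr g {m\<in>U. w m = 2} \<or> Pen3 g {m\<in>U. w m = 2} {m\<in>U. 0 \<le> w m}"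
  proof (cases "Zr g {m\<in>U. w m = 2}")
    case True then show ?thesis by blast
  next
    case False
    then obtain a0 where a0: "a0 \<in> U" "w a0 = 2" "nz (g a0)" unfolding Zr_def by blast
    have "\<exists>v. nz v \<and> dot v (g a0) = 0 \<and> ann g v {m\<in>U. 0 \<le> w m}"
    proof (cases "\<exists>b\<in>U. w b = 0 \<and> nz (cross (g a0) (g b))")
      case True
      then obtain b where b: "b \<in> U" "w b = 0" "nz (cross (g a0) (g b))" by blast
      have "ann g (cross (g a0) (g b)) {m\<in>U. 0 \<le> w m}"
        unfolding ann_def
      proof
        fix z assume z: "z \<in> {m\<in>U. 0 \<le> w m}"
        then have "w z = 2 \<or> w z = 0" using W by force
        then have "det3v (g a0) (g b) (g z) = 0"
        proof
          assume "w z = 2"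
          then have "\<not> nz (cross (g a0) (g z))" using CA a0 z by auto
          then show ?thesis using det_cross0(3) by blast
        next
          assume "w z = 0" then show ?thesis using H a0 b z unfolding NS_def by auto
        qed
        then show "dot (cross (g a0) (g b)) (g z) = 0" by (metis det3v_rot(1) dot_comm)
      qed
      moreover have "dot (cross (g a0) (g b)) (g a0) = 0" by (simp add: dot_comm)
      ultimately show ?thesis using b by blast
    next
      case False
      obtain i where i: "nz (cross (g a0) (ev i))" using perp_ex[OF a0(3)] by blast
      have d: "dot (cross (g a0) (ev i)) (g a0) = 0" by (simp add: dot_comm)
      have "ann g (cross (g a0) (ev i)) {m\<in>U. 0 \<le> w m}"
        unfolding ann_def
      proof
        fix z assume z: "z \<in> {m\<in>U. 0 \<le> w m}"
        then have "w z = 2 \<or> w z = 0" using W by force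
        then have "\<not> nz (cross (g a0) (g z))" using CA a0 z False by auto
        then show "dot (cross (g a0) (ev i)) (g z) = 0" using par_dot[OF a0(3) _ d] by blast
      qed
      then show ?thesis using i d by blast
    qed
    then obtain v where v: "nz v" "dot v (g a0) = 0" "ann g v {m\<in>U. 0 \<le> w m}" by blast
    obtain v' where v': "dot v' (g a0) = 0" "nz (cross v v')" using perp2[OF a0(3) v(1,2)] by blast
    have annA: "ann g u {m\<in>U. w m = 2}" if "dot u (g a0) = 0" for u
      unfolding ann_def using CA a0 par_dot[OF a0(3) _ that] by auto
    have "lc 1 v 0 v' = v" by (simp add: lc_def)
    then have "nz (lc 1 v 0 v') \<and> ann g (lc 1 v 0 v') {m\<in>U. 0 \<le> w m}" using v by simp
    then have "\<exists>a b. nz (lc a v b v') \<and> ann g (lc a v b v') {m\<in>U. 0 \<le> w m}" by blast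
    moreover have "ann g v {m\<in>U. w m = 2}" "ann g v' {m\<in>U. w m = 2}" using annA v(2) v'(1) by blast+
    ultimately have "Pen3 g {m\<in>U. w m = 2} {m\<in>U. 0 \<le> w m}"
      unfolding Pen3_def using v'(2) by blast
    then show ?thesis by blast
  qed
next
  assume "Zr g {m\<in>U. w m = 2} \<or> Pen3 g {m\<in>U. w m = 2} {m\<in>U. 0 \<le> w m}"
  then show "NS g U w"
  proof
    assume Z: "Zr g {m\<in>U. w m = 2}"
    show "NS g U w" unfolding NS_def
    proof (intro ballI impI)
      fix x y z assume xyz: "x \<in> U" "y \<in> U" "z \<in> U" "0 < w x + w y + w z"
      have "w x = 2 \<or> w x = 0 \<or> w x = -2" "w y = 2 \<or> w y = 0 \<or> w y = -2"
        "w z = 2 \<or> w z = 0 \<or> w z = -2" using W xyz by auto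
      then have "w x = 2 \<or> w y = 2 \<or> w z = 2" using xyz(4) by auto
      then have "\<not> nz (g x) \<or> \<not> nz (g y) \<or> \<not> nz (g z)"
        using ZrD[OF Z] xyz(1-3) by auto
      then show "det3v (g x) (g y) (g z) = 0" by (rule det_zero_any)
    qed
  next
    assume "Pen3 g {m\<in>U. w m = 2} {m\<in>U. 0 \<le> w m}"
    then obtain n n' a b where nn: "nz (cross n n')" "ann g n {m\<in>U. w m = 2}" "ann g n' {m\<in>U. w m = 2}"
      "nz (lc a n b n')" "ann g (lc a n b n') {m\<in>U. 0 \<le> w m}" unfolding Pen3_def by blast
    have "Pen g {m\<in>U. w m = 2}" unfolding Pen_def using nn by blast
    then have C: "\<And>a b. a \<in> U \<Longrightarrow> b \<in> U \<Longrightarrow> w a = 2 \<Longrightarrow> w b = 2 \<Longrightarrow> \<not> nz (cross (g a) (g b))"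
      unfolding K2 by blast
    have "ExV g {m\<in>U. 0 \<le> w m}" unfolding ExV_def using nn by blast
    then have D: "\<forall>x\<in>{m\<in>U. 0 \<le> w m}. \<forall>y\<in>{m\<in>U. 0 \<le> w m}. \<forall>z\<in>{m\<in>U. 0 \<le> w m}. det3v (g x) (g y) (g z) = 0"
      unfolding K1[symmetric] by blast
    show "NS g U w" unfolding NS_def
    proof (intro ballI impI)
      fix x y z assume xyz: "x \<in> U" "y \<in> U" "z \<in> U" "0 < w x + w y + w z"
      have "w x = 2 \<or> w x = 0 \<or> w x = -2" "w y = 2 \<or> w y = 0 \<or> w y = -2"
        "w z = 2 \<or> w z = 0 \<or> w z = -2" using W xyz by auto
      then have "w x = 2 \<and> w y = 2 \<or> w x = 2 \<and> w z = 2 \<or> w y = 2 \<and> w z = 2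
          \<or> (0 \<le> w x \<and> 0 \<le> w y \<and> 0 \<le> w z)"
        using xyz(4) by auto
      then show "det3v (g x) (g y) (g z) = 0"
      proof (elim disjE conjE)
        assume "w x = 2" "w y = 2" then show ?thesis using C xyz det_cross0(1) by blast
      next
        assume "w x = 2" "w z = 2" then show ?thesis using C xyz det_cross0(3) by blast
      next
        assume "w y = 2" "w z = 2" then show ?thesis using C xyz det_cross0(2) by blast
      next
        assume "0 \<le> w x" "0 \<le> w y" "0 \<le> w z" then show ?thesis using D xyz by blast
      qed
    qed
  qed
qed

lemma case4: assumes W: "\<forall>m\<in>U. w m = 4 \<or> w m = 1 \<or> w m = -2" and F: "Full g U"
  shows "NS g U w \<longleftrightarrow> (Zr g {m\<in>U. w m = 4} \<and> ExV g {m\<in>U. 1 \<le> w m}) \<or> Pen g {m\<in>U. 1 \<le> w m}"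
proof
  assume H: "NS g U w"
  have CA: "\<not> nz (cross (g a) (g b))" if "a \<in> U" "b \<in> U" "w a = 4" "1 \<le> w b" for a b
  proof (rule fullpair[OF F], rule ballI)
    fix z assume "z \<in> U"
    then have "w z = 4 \<or> w z = 1 \<or> w z = -2" using W by auto
    then have "0 < w a + w b + w z" using that by auto
    then show "det3v (g a) (g b) (g z) = 0" using NSD[OF H] that \<open>z \<in> U\<close> by simp
  qed
  show "(Zr g {m\<in>U. w m = 4} \<and> ExV g {m\<in>U. 1 \<le> w m}) \<or> Pen g {m\<in>U. 1 \<le> w m}"
  proof (cases "Zr g {m\<in>U. w m = 4}")
    case True
    have "\<forall>x\<in>{m\<in>U. 1 \<le> w m}. \<forall>y\<in>{m\<in>U. 1 \<le> w m}. \<forall>z\<in>{m\<in>U. 1 \<le> w m}. det3v (g x) (g y) (g z) = 0"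
    proof (intro ballI)
      fix x y z assume xyz: "x \<in> {m\<in>U. 1 \<le> w m}" "y \<in> {m\<in>U. 1 \<le> w m}" "z \<in> {m\<in>U. 1 \<le> w m}"
      then have "w x = 4 \<or> w x = 1" "w y = 4 \<or> w y = 1" "w z = 4 \<or> w z = 1"
        using W[rule_format, of x] W[rule_format, of y] W[rule_format, of z] by auto
      show "det3v (g x) (g y) (g z) = 0"
      proof (cases "0 < w x + w y + w z")
        case True then show ?thesis using NSD[OF H] xyz by simp
      next
        case False
        then have "w x = 4 \<or> w y = 4 \<or> w z = 4" using \<open>w x = 4 \<or> w x = 1\<close> \<open>w y = 4 \<or> w y = 1\<close>
          \<open>w z = 4 \<or> w z = 1\<close> by auto
        then have "\<not> nz (g x) \<or> \<not> nz (g y) \<or> \<not> nz (g z)"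
          using ZrD[OF \<open>Zr g {m\<in>U. w m = 4}\<close>] xyz by auto
        then show ?thesis by (rule det_zero_any)
      qed
    qed
    then show ?thesis unfolding K1[symmetric] using True by blast
  next
    case False
    then obtain a0 where a0: "a0 \<in> U" "w a0 = 4" "nz (g a0)" unfolding Zr_def by blast
    have "\<forall>x\<in>{m\<in>U. 1 \<le> w m}. \<forall>y\<in>{m\<in>U. 1 \<le> w m}. \<not> nz (cross (g x) (g y))"
    proof (intro ballI)
      fix x y assume "x \<in> {m\<in>U. 1 \<le> w m}" "y \<in> {m\<in>U. 1 \<le> w m}"
      then have "x \<in> U" "1 \<le> w x" "y \<in> U" "1 \<le> w y" by auto
      then show "\<not> nz (cross (g x) (g y))"
        using par_trans[OF a0(3) CA[OF a0(1) \<open>x \<in> U\<close> a0(2) \<open>1 \<le> w x\<close>] CA[OF a0(1) \<open>y \<in> U\<close> a0(2) \<open>1 \<le> w y\<close>]] by simp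
    qed
    then show ?thesis unfolding K2[symmetric] by blast
  qed
next
  assume "(Zr g {m\<in>U. w m = 4} \<and> ExV g {m\<in>U. 1 \<le> w m}) \<or> Pen g {m\<in>U. 1 \<le> w m}"
  then show "NS g U w"
  proof
    assume "Zr g {m\<in>U. w m = 4} \<and> ExV g {m\<in>U. 1 \<le> w m}"
    then have Z: "Zr g {m\<in>U. w m = 4}" and
      D: "\<forall>x\<in>{m\<in>U. 1 \<le> w m}. \<forall>y\<in>{m\<in>U. 1 \<le> w m}. \<forall>z\<in>{m\<in>U. 1 \<le> w m}. det3v (g x) (g y) (g z) = 0"
      unfolding K1[symmetric] by blast+
    show "NS g U w" unfolding NS_def
    proof (intro ballI impI)
      fix x y z assume xyz: "x \<in> U" "y \<in> U" "z \<in> U" "0 < w x + w y + w z"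
      have "w x = 4 \<or> w x = 1 \<or> w x = -2" "w y = 4 \<or> w y = 1 \<or> w y = -2"
        "w z = 4 \<or> w z = 1 \<or> w z = -2" using W xyz by auto
      then have "(w x = 4 \<or> w y = 4 \<or> w z = 4) \<or> (1 \<le> w x \<and> 1 \<le> w y \<and> 1 \<le> w z)"
        using xyz(4) by auto
      then show "det3v (g x) (g y) (g z) = 0"
      proof
        assume "w x = 4 \<or> w y = 4 \<or> w z = 4"
        then have "\<not> nz (g x) \<or> \<not> nz (g y) \<or> \<not> nz (g z)"
          using ZrD[OF Z] xyz(1-3) by auto
        then show ?thesis by (rule det_zero_any)
      next
        assume "1 \<le> w x \<and> 1 \<le> w y \<and> 1 \<le> w z"
        then show ?thesis using D xyz(1-3) by simp
      qed
    qed
  next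
    assume "Pen g {m\<in>U. 1 \<le> w m}"
    then have C: "\<And>a b. a \<in> U \<Longrightarrow> b \<in> U \<Longrightarrow> 1 \<le> w a \<Longrightarrow> 1 \<le> w b \<Longrightarrow> \<not> nz (cross (g a) (g b))"
      unfolding K2 by blast
    show "NS g U w" unfolding NS_def
    proof (intro ballI impI)
      fix x y z assume xyz: "x \<in> U" "y \<in> U" "z \<in> U" "0 < w x + w y + w z"
      have "w x = 4 \<or> w x = 1 \<or> w x = -2" "w y = 4 \<or> w y = 1 \<or> w y = -2"
        "w z = 4 \<or> w z = 1 \<or> w z = -2" using W xyz by auto
      then have "1 \<le> w x \<and> 1 \<le> w y \<or> 1 \<le> w x \<and> 1 \<le> w z \<or> 1 \<le> w y \<and> 1 \<le> w z"
        using xyz(4) by auto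
      then show "det3v (g x) (g y) (g z) = 0"
      proof (elim disjE conjE)
        assume "1 \<le> w x" "1 \<le> w y" then show ?thesis using C xyz det_cross0(1) by blast
      next
        assume "1 \<le> w x" "1 \<le> w z" then show ?thesis using C xyz det_cross0(3) by blast
      next
        assume "1 \<le> w y" "1 \<le> w z" then show ?thesis using C xyz det_cross0(2) by blast
      qed
    qed
  qed
qed

lemma case5: assumes W: "\<forall>m\<in>U. w m = 10 \<or> w m = 4 \<or> w m = -2" and F: "Full g U"
  shows "NS g U w \<longleftrightarrow> Zr g {m\<in>U. w m = 10} \<and> Pen g {m\<in>U. 4 \<le> w m}"
proof
  assume H: "NS g U w"
  have ZA: "\<not> nz (g a)" if "a \<in> U" "w a = 10" for a
  proof (rule fullzero[OF F], intro ballI)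
    fix x z assume "x \<in> U" "z \<in> U"
    then have "w x = 10 \<or> w x = 4 \<or> w x = -2" "w z = 10 \<or> w z = 4 \<or> w z = -2" using W by auto
    then show "det3v (g a) (g x) (g z) = 0" using H that \<open>x \<in> U\<close> \<open>z \<in> U\<close> unfolding NS_def by auto
  qed
  have CB: "\<not> nz (cross (g a) (g b))" if "a \<in> U" "b \<in> U" "4 \<le> w a" "4 \<le> w b" for a b
  proof (cases "w a = 10 \<or> w b = 10")
    case True
    then show ?thesis
    proof
      assume "w a = 10" then show ?thesis using ZA[OF that(1)] zero_cross(1) by blast
    next
      assume "w b = 10" then show ?thesis using ZA[OF that(2)] zero_cross(2) by blast
    qed
  next
    case False
    then have "w a = 4" "w b = 4" using W that by force+
    show ?thesis
    proof (rule fullpair[OF F], rule ballI)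
      fix z assume "z \<in> U"
      then have "w z = 10 \<or> w z = 4 \<or> w z = -2" using W by auto
      then show "det3v (g a) (g b) (g z) = 0" using H that \<open>z \<in> U\<close> \<open>w a = 4\<close> \<open>w b = 4\<close>
        unfolding NS_def by auto
    qed
  qed
  have "Pen g {m\<in>U. 4 \<le> w m}" by (subst K2) (use CB in auto)
  moreover have "Zr g {m\<in>U. w m = 10}" unfolding Zr_def using ZA by auto
  ultimately show "Zr g {m\<in>U. w m = 10} \<and> Pen g {m\<in>U. 4 \<le> w m}" by blast
next
  assume "Zr g {m\<in>U. w m = 10} \<and> Pen g {m\<in>U. 4 \<le> w m}"
  then have Z: "Zr g {m\<in>U. w m = 10}" and P: "Pen g {m\<in>U. 4 \<le> w m}" by blast+
  have C: "\<And>a b. a \<in> U \<Longrightarrow> b \<in> U \<Longrightarrow> 4 \<le> w a \<Longrightarrow> 4 \<le> w b \<Longrightarrow> \<not> nz (cross (g a) (g b))"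
    using P unfolding K2 by blast
  show "NS g U w" unfolding NS_def
  proof (intro ballI impI)
    fix x y z assume xyz: "x \<in> U" "y \<in> U" "z \<in> U" "0 < w x + w y + w z"
    have "w x = 10 \<or> w x = 4 \<or> w x = -2" "w y = 10 \<or> w y = 4 \<or> w y = -2"
      "w z = 10 \<or> w z = 4 \<or> w z = -2" using W xyz by auto
    then have "w x = 10 \<or> w y = 10 \<or> w z = 10 \<or> 4 \<le> w x \<and> 4 \<le> w y \<or> 4 \<le> w x \<and> 4 \<le> w z \<or> 4 \<le> w y \<and> 4 \<le> w z"
      using xyz(4) by auto
    then show "det3v (g x) (g y) (g z) = 0"
    proof (elim disjE conjE)
      assume "w x = 10" then show ?thesis using Z xyz det_zero_col(1) unfolding Zr_def by blast
    next
      assume "w y = 10" then show ?thesis using Z xyz det_zero_col(2) unfolding Zr_def by blast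
    next
      assume "w z = 10" then show ?thesis using Z xyz det_zero_col(3) unfolding Zr_def by blast
    next
      assume "4 \<le> w x" "4 \<le> w y" then show ?thesis using C xyz det_cross0(1) by blast
    next
      assume "4 \<le> w x" "4 \<le> w z" then show ?thesis using C xyz det_cross0(3) by blast
    next
      assume "4 \<le> w y" "4 \<le> w z" then show ?thesis using C xyz det_cross0(2) by blast
    qed
  qed
qed


definition BB :: "complex mat \<Rightarrow> complex mat \<Rightarrow> complex mat" where
  "BB M A = transpose_mat M * A * M"

lemma BB_carrier[simp]: "M \<in> carrier_mat 6 6 \<Longrightarrow> A \<in> carrier_mat 6 6 \<Longrightarrow> BB M A \<in> carrier_mat 6 6"
  unfolding BB_def by auto

lemma BB_sym: assumes "sym6 A" "M \<in> carrier_mat 6 6" "i < 6" "j < 6"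
  shows "BB M A $$ (i,j) = BB M A $$ (j,i)"
proof -
  have A: "A \<in> carrier_mat 6 6" "transpose_mat A = A" using assms(1) by (auto simp: sym6_def)
  have "transpose_mat (BB M A) = transpose_mat M * transpose_mat A * M"
    unfolding BB_def using A assms(2)
    by (simp add: transpose_mult[of _ 6 6 _ 6])
  then have "transpose_mat (BB M A) = BB M A" using A unfolding BB_def by simp
  then have "transpose_mat (BB M A) $$ (i,j) = BB M A $$ (i,j)" by simp
  then show ?thesis using assms BB_carrier[OF assms(2) A(1)] by simp
qed

lemma qcoeff_BB: "qcoeff M A (p,q) = (if p = q then 1 else 2) * BB M A $$ (p,q)"
  by (simp add: qcoeff_def BB_def)

lemma qcoeff0: "qcoeff M A (p,q) = 0 \<longleftrightarrow> BB M A $$ (p,q) = 0"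
  by (simp add: qcoeff_BB)

lemma quad_BB: assumes "M \<in> carrier_mat 6 6" "A \<in> carrier_mat 6 6" "x \<in> carrier_vec 6"
  shows "quad A (M *\<^sub>v x) = x \<bullet> (BB M A *\<^sub>v x)"
proof -
  have "quad A (M *\<^sub>v x) = (A *\<^sub>v (M *\<^sub>v x)) \<bullet> (M *\<^sub>v x)"
    unfolding quad_def using assms by (intro comm_scalar_prod[of _ 6]) auto
  also have "\<dots> = (transpose_mat M *\<^sub>v (A *\<^sub>v (M *\<^sub>v x))) \<bullet> x"
    using transpose_vec_mult_scalar[of M 6 6 x "A *\<^sub>v (M *\<^sub>v x)"] assms by simp
  also have "\<dots> = x \<bullet> (transpose_mat M *\<^sub>v (A *\<^sub>v (M *\<^sub>v x)))"
    using assms by (intro comm_scalar_prod[of _ 6]) auto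
  also have "transpose_mat M *\<^sub>v (A *\<^sub>v (M *\<^sub>v x)) = BB M A *\<^sub>v x"
  proof -
    have "BB M A *\<^sub>v x = (transpose_mat M * (A * M)) *\<^sub>v x" using assms by (simp add: BB_def)
    also have "\<dots> = transpose_mat M *\<^sub>v ((A * M) *\<^sub>v x)"
      by (rule assoc_mult_mat_vec[of _ 6 6 _ 6]) (use assms in auto)
    also have "(A * M) *\<^sub>v x = A *\<^sub>v (M *\<^sub>v x)"
      by (rule assoc_mult_mat_vec[of _ 6 6 _ 6]) (use assms in auto)
    finally show ?thesis by simp
  qed
  finally show ?thesis .
qed

lemma bilin_sum: assumes "B \<in> carrier_mat 6 6" "x \<in> carrier_vec 6"
  shows "x \<bullet> (B *\<^sub>v x) = (\<Sum>i\<in>{0..<6}. x $ i * (\<Sum>k\<in>{0..<6}. B $$ (i,k) * x $ k))"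
  using assms by (simp add: scalar_prod_def row_def)

lemma unit_bilin: assumes "(B :: complex mat) \<in> carrier_mat 6 6" "p < 6" "q < 6"
  shows "unit_vec 6 p \<bullet> (B *\<^sub>v unit_vec 6 q) = B $$ (p,q)"
proof -
  have c: "B *\<^sub>v unit_vec 6 q \<in> carrier_vec 6" using assms by simp
  have "unit_vec 6 p \<bullet> (B *\<^sub>v unit_vec 6 q) = (B *\<^sub>v unit_vec 6 q) $ p"
    using scalar_prod_left_unit[OF c assms(2)] .
  also have "\<dots> = row B p \<bullet> unit_vec 6 q" using assms by simp
  also have "\<dots> = row B p $ q" using scalar_prod_right_unit[OF assms(3)] .
  also have "\<dots> = B $$ (p,q)" using assms by simp
  finally show ?thesis .
qed


lemma flag_unit: "j < 6 \<Longrightarrow> p \<le> j \<Longrightarrow> M *\<^sub>v unit_vec 6 p \<in> flagsp M j"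
  unfolding flagsp_def by auto

lemma flag_unit2: "j < 6 \<Longrightarrow> p \<le> j \<Longrightarrow> q \<le> j \<Longrightarrow> M *\<^sub>v (unit_vec 6 p + unit_vec 6 q) \<in> flagsp M j"
  unfolding flagsp_def by auto

lemma contains_iff: assumes S: "sym6 A" and M: "M \<in> carrier_mat 6 6" and j: "j < 6"
  shows "contains A (flagsp M j) \<longleftrightarrow> (\<forall>m\<in>monomials. snd m \<le> j \<longrightarrow> qcoeff M A m = 0)"
proof -
  have A: "A \<in> carrier_mat 6 6" using S by (simp add: sym6_def)
  let ?B = "BB M A"
  have Bc: "?B \<in> carrier_mat 6 6" using A M by simp
  show ?thesis
  proof
    assume H: "contains A (flagsp M j)"
    show "\<forall>m\<in>monomials. snd m \<le> j \<longrightarrow> qcoeff M A m = 0"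
    proof (intro ballI impI)
      fix m assume m: "m \<in> monomials" "snd m \<le> j"
      obtain p q where pq: "m = (p,q)" by (cases m)
      have pq2: "p \<le> q" "q \<le> j" using m pq j by (auto simp: monomials_def)
      then have p6: "p < 6" "q < 6" using j by auto
      have d: "?B $$ (p,p) = 0" if "p \<le> j" "p < 6" for p
      proof -
        have "quad A (M *\<^sub>v unit_vec 6 p) = 0" using H flag_unit[OF j that(1)] unfolding contains_def by blast
        then show ?thesis using quad_BB[OF M A, of "unit_vec 6 p"] unit_bilin[OF Bc that(2) that(2)] by simp
      qed
      show "qcoeff M A m = 0"
      proof (cases "p = q")
        case True then show ?thesis using d[of p] pq pq2 p6 by (simp add: qcoeff0)
      next
        case False
        let ?x = "unit_vec 6 p + unit_vec 6 q :: complex vec"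
        have "quad A (M *\<^sub>v ?x) = 0" using H flag_unit2[OF j, of p q] pq2 unfolding contains_def by auto
        then have "?x \<bullet> (?B *\<^sub>v ?x) = 0" using quad_BB[OF M A, of ?x] by simp
        moreover have "?x \<bullet> (?B *\<^sub>v ?x) = ?B $$ (p,p) + ?B $$ (p,q) + ?B $$ (q,p) + ?B $$ (q,q)"
        proof -
          have u: "unit_vec 6 p \<in> carrier_vec 6" "unit_vec 6 q \<in> carrier_vec 6" by auto
          have "?B *\<^sub>v ?x = ?B *\<^sub>v unit_vec 6 p + ?B *\<^sub>v unit_vec 6 q"
            using Bc u by (simp add: mult_add_distrib_mat_vec)
          then show ?thesis using Bc u p6
            by (simp add: add_scalar_prod_distrib[of _ 6] scalar_prod_add_distrib[of _ 6] unit_bilin)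
        qed
        ultimately have "2 * ?B $$ (p,q) = 0" using d[of p] d[of q] pq2 p6 BB_sym[OF S M, of p q] by simp
        then show ?thesis using pq by (simp add: qcoeff0)
      qed
    qed
  next
    assume H: "\<forall>m\<in>monomials. snd m \<le> j \<longrightarrow> qcoeff M A m = 0"
    have Bz: "?B $$ (i,k) = 0" if "i \<le> j" "k \<le> j" for i k :: nat
    proof (cases "i \<le> k")
      case True
      then have "(i,k) \<in> monomials" using that j by (auto simp: monomials_def)
      then show ?thesis using H that by (auto simp: qcoeff0)
    next
      case False
      then have "(k,i) \<in> monomials" using that j by (auto simp: monomials_def)
      then have "?B $$ (k,i) = 0" using H that by (auto simp: qcoeff0)
      then show ?thesis using BB_sym[OF S M, of i k] that j by simp
    qed
    show "contains A (flagsp M j)" unfolding contains_def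
    proof
      fix v assume "v \<in> flagsp M j"
      then obtain x where x: "v = M *\<^sub>v x" "x \<in> carrier_vec 6" "\<And>k. j < k \<Longrightarrow> k < 6 \<Longrightarrow> x $ k = 0"
        unfolding flagsp_def by blast
      have "quad A v = (\<Sum>i\<in>{0..<6}. x $ i * (\<Sum>k\<in>{0..<6}. ?B $$ (i,k) * x $ k))"
        using quad_BB[OF M A x(2)] bilin_sum[OF Bc x(2)] x(1) by simp
      also have "\<dots> = 0"
      proof (intro sum.neutral ballI)
        fix i :: nat assume i: "i \<in> {0..<6}"
        have "(\<Sum>k\<in>{0..<6}. ?B $$ (i,k) * x $ k) = 0" if "i \<le> j"
        proof (intro sum.neutral ballI)
          fix k :: nat assume k: "k \<in> {0..<6}"
          show "?B $$ (i,k) * x $ k = 0"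
            using Bz[OF that, of k] x(3)[of k] k by (cases "k \<le> j") auto
        qed
        then show "x $ i * (\<Sum>k\<in>{0..<6}. ?B $$ (i,k) * x $ k) = 0"
          using x(3)[of i] i by (cases "i \<le> j") auto
      qed
      finally show "quad A v = 0" .
    qed
  qed
qed



lemma inv_ex: assumes M: "M \<in> carrier_mat 6 6" and I: "invertible_mat M"
  shows "\<exists>N\<in>carrier_mat 6 6. M * N = 1\<^sub>m 6 \<and> N * M = 1\<^sub>m 6"
proof -
  obtain N where N: "inverts_mat M N" "inverts_mat N M" using I unfolding invertible_mat_def by blast
  have 1: "M * N = 1\<^sub>m 6" using N(1) M unfolding inverts_mat_def carrier_mat_def by auto
  have c: "dim_col N = 6" using arg_cong[OF 1, of dim_col] by (simp only: index_mult_mat index_one_mat)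
  have 2: "N * M = 1\<^sub>m (dim_row N)" using N(2) unfolding inverts_mat_def by (simp only:)
  have "dim_col M = dim_row N" using arg_cong[OF 2, of dim_col] by (simp only: index_mult_mat index_one_mat)
  moreover have "dim_col M = 6" using M by auto
  ultimately have r: "dim_row N = 6" by linarith
  have "N \<in> carrier_mat 6 6" using r c unfolding carrier_mat_def by blast
  then show ?thesis using 1 2 r by metis
qed
lemma BB_mv: assumes "M \<in> carrier_mat 6 6" "A \<in> carrier_mat 6 6" "x \<in> carrier_vec 6"
  shows "BB M A *\<^sub>v x = transpose_mat M *\<^sub>v (A *\<^sub>v (M *\<^sub>v x))"
proof -
  have "BB M A *\<^sub>v x = (transpose_mat M * (A * M)) *\<^sub>v x" using assms by (simp add: BB_def)
  also have "\<dots> = transpose_mat M *\<^sub>v ((A * M) *\<^sub>v x)"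
    by (rule assoc_mult_mat_vec[of _ 6 6 _ 6]) (use assms in auto)
  also have "(A * M) *\<^sub>v x = A *\<^sub>v (M *\<^sub>v x)"
    by (rule assoc_mult_mat_vec[of _ 6 6 _ 6]) (use assms in auto)
  finally show ?thesis by simp
qed

lemma mv_zero: "(A :: complex mat) \<in> carrier_mat n m \<Longrightarrow> A *\<^sub>v 0\<^sub>v m = 0\<^sub>v n"
  by (intro eq_vecI) (auto simp: scalar_prod_def)

lemma sing_iff: assumes S: "sym6 A" and M: "M \<in> carrier_mat 6 6" and I: "invertible_mat M"
  shows "sing_along A (flagsp M j) \<longleftrightarrow> (\<forall>m\<in>monomials. fst m \<le> j \<longrightarrow> qcoeff M A m = 0)"
proof -
  have A: "A \<in> carrier_mat 6 6" using S by (simp add: sym6_def)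
  let ?B = "BB M A"
  have Bc: "?B \<in> carrier_mat 6 6" using A M by simp
  obtain N where N: "N \<in> carrier_mat 6 6" "M * N = 1\<^sub>m 6" "N * M = 1\<^sub>m 6" using inv_ex[OF M I] by blast
  have NT: "transpose_mat N * transpose_mat M = 1\<^sub>m 6"
  proof -
    have "transpose_mat (M * N) = transpose_mat N * transpose_mat M"
      using M N(1) by (simp add: transpose_mult[of _ 6 6 _ 6])
    then show ?thesis using N(2) by simp
  qed
  show ?thesis
  proof
    assume H: "sing_along A (flagsp M j)"
    show "\<forall>m\<in>monomials. fst m \<le> j \<longrightarrow> qcoeff M A m = 0"
    proof (intro ballI impI)
      fix m assume m: "m \<in> monomials" "fst m \<le> j"
      obtain p q where pq: "m = (p,q)" by (cases m)
      have pq2: "p \<le> q" "q < 6" "p \<le> j" using m pq by (auto simp: monomials_def)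
      have "M *\<^sub>v unit_vec 6 p \<in> flagsp M j" unfolding flagsp_def using pq2 by auto
      then have "A *\<^sub>v (M *\<^sub>v unit_vec 6 p) = 0\<^sub>v 6" using H unfolding sing_along_def by blast
      then have "?B *\<^sub>v unit_vec 6 p = 0\<^sub>v 6" using BB_mv[OF M A, of "unit_vec 6 p"] mv_zero[of "transpose_mat M" 6 6] M by simp
      then have "(?B *\<^sub>v unit_vec 6 p) $ q = 0" using pq2 by simp
      moreover have "(?B *\<^sub>v unit_vec 6 p) $ q = ?B $$ (q,p)"
        using Bc pq2 by simp
      ultimately have "?B $$ (q,p) = 0" by simp
      then have "?B $$ (p,q) = 0" using BB_sym[OF S M, of p q] pq2 by simp
      then show "qcoeff M A m = 0" using pq by (simp add: qcoeff0)
    qed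
  next
    assume H: "\<forall>m\<in>monomials. fst m \<le> j \<longrightarrow> qcoeff M A m = 0"
    have Bz: "?B $$ (i,k) = 0" if "k \<le> j" "i < 6" "k < 6" for i k :: nat
    proof (cases "i \<le> k")
      case True
      then have "(i,k) \<in> monomials" using that by (auto simp: monomials_def)
      then show ?thesis using H that True by (auto simp: qcoeff0)
    next
      case False
      then have "(k,i) \<in> monomials" using that by (auto simp: monomials_def)
      then have "?B $$ (k,i) = 0" using H that by (auto simp: qcoeff0)
      then show ?thesis using BB_sym[OF S M, of i k] that by simp
    qed
    show "sing_along A (flagsp M j)" unfolding sing_along_def
    proof
      fix v assume "v \<in> flagsp M j"
      then obtain x where x: "v = M *\<^sub>v x" "x \<in> carrier_vec 6" "\<And>k. j < k \<Longrightarrow> k < 6 \<Longrightarrow> x $ k = 0"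
        unfolding flagsp_def by blast
      have Bx: "?B *\<^sub>v x = 0\<^sub>v 6"
      proof (rule eq_vecI)
        fix i assume "i < dim_vec (0\<^sub>v 6 :: complex vec)"
        then have i: "i < 6" by simp
        have "(?B *\<^sub>v x) $ i = (\<Sum>k\<in>{0..<6}. ?B $$ (i,k) * x $ k)"
          using Bc x(2) i by (simp add: scalar_prod_def row_def)
        also have "\<dots> = 0"
        proof (intro sum.neutral ballI)
          fix k :: nat assume k: "k \<in> {0..<6}"
          show "?B $$ (i,k) * x $ k = 0"
            using Bz[of k i] x(3)[of k] k i by (cases "k \<le> j") auto
        qed
        finally show "(?B *\<^sub>v x) $ i = 0\<^sub>v 6 $ i" using i by simp
      qed (use Bc in simp)
      have Av: "A *\<^sub>v v \<in> carrier_vec 6" using A x M by simp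
      have "A *\<^sub>v v = (transpose_mat N * transpose_mat M) *\<^sub>v (A *\<^sub>v v)" using NT Av by simp
      also have "\<dots> = transpose_mat N *\<^sub>v (transpose_mat M *\<^sub>v (A *\<^sub>v v))"
        by (rule assoc_mult_mat_vec[of _ 6 6 _ 6]) (use N M Av in auto)
      also have "transpose_mat M *\<^sub>v (A *\<^sub>v v) = 0\<^sub>v 6"
        using BB_mv[OF M A x(2)] Bx x(1) by simp
      finally show "A *\<^sub>v v = 0\<^sub>v 6" using mv_zero[of "transpose_mat N" 6 6] N by simp
    qed
  qed
qed

lemma zero_from_coeffs: assumes S: "sym6 A" and M: "M \<in> carrier_mat 6 6" and I: "invertible_mat M"
  and H: "\<forall>m\<in>monomials. qcoeff M A m = 0"
  shows "A = 0\<^sub>m 6 6"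
proof -
  have A: "A \<in> carrier_mat 6 6" using S by (simp add: sym6_def)
  obtain N where N: "N \<in> carrier_mat 6 6" "M * N = 1\<^sub>m 6" "N * M = 1\<^sub>m 6" using inv_ex[OF M I] by blast
  have "sing_along A (flagsp M 5)" using sing_iff[OF S M I] H by blast
  then have sa: "A *\<^sub>v (M *\<^sub>v x) = 0\<^sub>v 6" if "x \<in> carrier_vec 6" for x
  proof -
    have "M *\<^sub>v x \<in> flagsp M 5" unfolding flagsp_def using that by auto
    then show ?thesis using \<open>sing_along A (flagsp M 5)\<close> unfolding sing_along_def by blast
  qed
  show ?thesis
  proof (rule eq_matI)
    fix i k assume ik: "i < dim_row (0\<^sub>m 6 6 :: complex mat)" "k < dim_col (0\<^sub>m 6 6 :: complex mat)"
    then have i6: "i < 6" "k < 6" by auto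
    have "M *\<^sub>v (N *\<^sub>v unit_vec 6 k) = (M * N) *\<^sub>v unit_vec 6 k"
      by (rule assoc_mult_mat_vec[symmetric, of _ 6 6 _ 6]) (use M N in auto)
    also have "\<dots> = unit_vec 6 k" using N(2) by simp
    finally have "A *\<^sub>v unit_vec 6 k = 0\<^sub>v 6" using sa[of "N *\<^sub>v unit_vec 6 k"] N by simp
    then have "(A *\<^sub>v unit_vec 6 k) $ i = 0" using i6 by simp
    moreover have "(A *\<^sub>v unit_vec 6 k) $ i = A $$ (i,k)" using A i6 by simp
    ultimately show "A $$ (i,k) = 0\<^sub>m 6 6 $$ (i,k)" using i6 by simp
  qed (use A in auto)
qed


lemma mono_cases: "m \<in> monomials \<Longrightarrow> \<exists>p q. m = (p,q) \<and> p \<le> q \<and> q < 6"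
  unfolding monomials_def by auto

lemma w1: assumes "m \<in> monomials"
  shows "mweight [1,1,1,1,1,-5] m = (if snd m \<le> 4 then 2 else if fst m \<le> 4 then -4 else -10)"
proof -
  obtain p q where pq: "m = (p,q)" "p \<le> q" "q < 6" using mono_cases[OF assms] by blast
  have "q = 0 \<or> q = 1 \<or> q = 2 \<or> q = 3 \<or> q = 4 \<or> q = 5" using pq by auto
  moreover have "p = 0 \<or> p = 1 \<or> p = 2 \<or> p = 3 \<or> p = 4 \<or> p = 5" using pq by auto
  ultimately show ?thesis using pq(1,2) by (auto simp: mweight_def)
qed

lemma det3: "det (mat 3 3 f :: 'a :: comm_ring_1 mat) = f (0,0) * (f (1,1) * f (2,2) - f (1,2) * f (2,1))
   - f (0,1) * (f (1,0) * f (2,2) - f (1,2) * f (2,0)) + f (0,2) * (f (1,0) * f (2,1) - f (1,1) * f(2,0))"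
proof -
  have det0: "det (mat 0 0 g) = 1" for g :: "nat \<times> nat \<Rightarrow> 'a" by (rule det_dim_zero) auto
  have det1: "det (mat (Suc 0) (Suc 0) g) = g (0,0)" for g :: "nat \<times> nat \<Rightarrow> 'a"
    by (subst laplace_expansion_row[of _ 1 0]) (auto simp: cofactor_def mat_delete_def det0)
  have det2: "det (mat (Suc (Suc 0)) (Suc (Suc 0)) g) = g (0,0) * g (1,1) - g (0,1) * g (1,0)" for g :: "nat \<times> nat \<Rightarrow> 'a"
    apply (subst laplace_expansion_row[of _ "Suc (Suc 0)" 0], simp, simp)
    apply (simp add: cofactor_def numeral_2_eq_2 lessThan_Suc mat_delete_def det1)
    done
  show ?thesis
    apply (subst laplace_expansion_row[of _ 3 0], simp, simp)
    apply (simp add: cofactor_def numeral_3_eq_3 lessThan_Suc mat_delete_def det2)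
    apply (simp add: algebra_simps numeral_2_eq_2)
    done
qed

definition gcol :: "complex mat \<Rightarrow> complex mat \<Rightarrow> complex mat \<Rightarrow> complex mat \<Rightarrow> nat \<times> nat \<Rightarrow> v3" where
  "gcol M Q1 Q2 Q3 m = (\<lambda>k. qcoeff M ([Q1, Q2, Q3] ! k) m)"

lemma plucker_det: "plucker M Q1 Q2 Q3 m1 m2 m3 = det3v (gcol M Q1 Q2 Q3 m1) (gcol M Q1 Q2 Q3 m2) (gcol M Q1 Q2 Q3 m3)"
  unfolding plucker_def det3 by (simp add: gcol_def det3v_def dot_def cross_def algebra_simps numeral_2_eq_2)


lemma w2: assumes "m \<in> monomials"
  shows "mweight [1,1,1,1,-2,-2] m = (if snd m \<le> 3 then 2 else if fst m \<le> 3 then -1 else -4)"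
proof -
  obtain p q where pq: "m = (p,q)" "p \<le> q" "q < 6" using mono_cases[OF assms] by blast
  have "q = 0 \<or> q = 1 \<or> q = 2 \<or> q = 3 \<or> q = 4 \<or> q = 5" using pq by auto
  moreover have "p = 0 \<or> p = 1 \<or> p = 2 \<or> p = 3 \<or> p = 4 \<or> p = 5" using pq by auto
  ultimately show ?thesis using pq(1,2) by (auto simp: mweight_def)
qed

lemma w3: assumes "m \<in> monomials"
  shows "mweight [1,1,1,-1,-1,-1] m = (if snd m \<le> 2 then 2 else if fst m \<le> 2 then 0 else -2)"
proof -
  obtain p q where pq: "m = (p,q)" "p \<le> q" "q < 6" using mono_cases[OF assms] by blast
  have "q = 0 \<or> q = 1 \<or> q = 2 \<or> q = 3 \<or> q = 4 \<or> q = 5" using pq by auto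
  moreover have "p = 0 \<or> p = 1 \<or> p = 2 \<or> p = 3 \<or> p = 4 \<or> p = 5" using pq by auto
  ultimately show ?thesis using pq(1,2) by (auto simp: mweight_def)
qed

lemma w4: assumes "m \<in> monomials"
  shows "mweight [2,2,-1,-1,-1,-1] m = (if snd m \<le> 1 then 4 else if fst m \<le> 1 then 1 else -2)"
proof -
  obtain p q where pq: "m = (p,q)" "p \<le> q" "q < 6" using mono_cases[OF assms] by blast
  have "q = 0 \<or> q = 1 \<or> q = 2 \<or> q = 3 \<or> q = 4 \<or> q = 5" using pq by auto
  moreover have "p = 0 \<or> p = 1 \<or> p = 2 \<or> p = 3 \<or> p = 4 \<or> p = 5" using pq by auto
  ultimately show ?thesis using pq(1,2) by (auto simp: mweight_def)
qed

lemma w5: assumes "m \<in> monomials"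
  shows "mweight [5,-1,-1,-1,-1,-1] m = (if snd m \<le> 0 then 10 else if fst m \<le> 0 then 4 else -2)"
proof -
  obtain p q where pq: "m = (p,q)" "p \<le> q" "q < 6" using mono_cases[OF assms] by blast
  have "q = 0 \<or> q = 1 \<or> q = 2 \<or> q = 3 \<or> q = 4 \<or> q = 5" using pq by auto
  moreover have "p = 0 \<or> p = 1 \<or> p = 2 \<or> p = 3 \<or> p = 4 \<or> p = 5" using pq by auto
  ultimately show ?thesis using pq(1,2) by (auto simp: mweight_def)
qed

lemma det_rep: "det3v u u w = 0" "det3v u w u = 0" "det3v w u u = 0"
  by (simp_all add: det3v_def dot_def cross_def algebra_simps)

lemma notstable_NS: "\<not> stable_wrt a M Q1 Q2 Q3 \<longleftrightarrow> NS (gcol M Q1 Q2 Q3) monomials (mweight a)"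
proof
  assume H: "\<not> stable_wrt a M Q1 Q2 Q3"
  show "NS (gcol M Q1 Q2 Q3) monomials (mweight a)" unfolding NS_def
  proof (intro ballI impI)
    fix x y z assume xyz: "x \<in> monomials" "y \<in> monomials" "z \<in> monomials"
      "0 < mweight a x + mweight a y + mweight a z"
    show "det3v (gcol M Q1 Q2 Q3 x) (gcol M Q1 Q2 Q3 y) (gcol M Q1 Q2 Q3 z) = 0"
    proof (cases "distinct [x,y,z]")
      case True
      then show ?thesis using H xyz unfolding stable_wrt_def plucker_det by auto
    next
      case False
      then have "x = y \<or> x = z \<or> y = z" by auto
      then show ?thesis using det_rep by auto
    qed
  qed
next
  assume H: "NS (gcol M Q1 Q2 Q3) monomials (mweight a)"
  show "\<not> stable_wrt a M Q1 Q2 Q3" unfolding stable_wrt_def plucker_det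
    using NSD[OF H] by auto
qed

definition Aw :: "complex mat \<Rightarrow> complex mat \<Rightarrow> complex mat \<Rightarrow> v3 \<Rightarrow> complex mat" where
  "Aw Q1 Q2 Q3 w = w 0 \<cdot>\<^sub>m Q1 + w 1 \<cdot>\<^sub>m Q2 + w 2 \<cdot>\<^sub>m Q3"

lemma indep_iff: "nz (cross w w') \<longleftrightarrow> (\<forall>a b. \<not> nz (lc a w b w') \<longrightarrow> a = 0 \<and> b = 0)"
proof
  assume c: "nz (cross w w')"
  show "\<forall>a b. \<not> nz (lc a w b w') \<longrightarrow> a = 0 \<and> b = 0"
  proof (intro allI impI)
    fix a b assume z: "\<not> nz (lc a w b w')"
    have "cross (lc a w b w') w' i = a * cross w w' i" "cross w (lc a w b w') i = b * cross w w' i" for i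
      by (auto simp: cross_def lc_def algebra_simps)
    moreover have "\<not> nz (cross (lc a w b w') w')" "\<not> nz (cross w (lc a w b w'))"
      using zero_cross z by blast+
    ultimately have "a * cross w w' 0 = 0 \<and> a * cross w w' 1 = 0 \<and> a * cross w w' 2 = 0"
       "b * cross w w' 0 = 0 \<and> b * cross w w' 1 = 0 \<and> b * cross w w' 2 = 0"
      unfolding nz_def by metis+
    then show "a = 0 \<and> b = 0" using c unfolding nz_def by auto
  qed
next
  assume H: "\<forall>a b. \<not> nz (lc a w b w') \<longrightarrow> a = 0 \<and> b = 0"
  show "nz (cross w w')"
  proof (rule ccontr)
    assume c: "\<not> nz (cross w w')"
    show False
    proof (cases "nz w")
      case True
      obtain l where l: "w' 0 = l * w 0 \<and> w' 1 = l * w 1 \<and> w' 2 = l * w 2" using par[OF True c] by blast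
      have "\<not> nz (lc l w (-1) w')" using l by (simp add: nz_def lc_def)
      then show False using H by force
    next
      case False
      have "\<not> nz (lc 1 w 0 w')" using False by (simp add: nz_def lc_def)
      then show False using H by force
    qed
  qed
qed


lemma BB_entry: assumes "M \<in> carrier_mat 6 6" "A \<in> carrier_mat 6 6" "p < 6" "q < 6"
  shows "BB M A $$ (p,q) = (\<Sum>i\<in>{0..<6}. M $$ (i,p) * (\<Sum>k\<in>{0..<6}. A $$ (i,k) * M $$ (k,q)))"
  using assms by (simp add: BB_def scalar_prod_def)

locale net =
  fixes Q1 Q2 Q3 :: "complex mat"
  assumes s1: "sym6 Q1" and s2: "sym6 Q2" and s3: "sym6 Q3" and ind: "indep3 Q1 Q2 Q3"
begin

lemma carr: "Q1 \<in> carrier_mat 6 6" "Q2 \<in> carrier_mat 6 6" "Q3 \<in> carrier_mat 6 6"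
  using s1 s2 s3 by (auto simp: sym6_def)

lemma dims: "dim_row Q1 = 6" "dim_col Q1 = 6" "dim_row Q2 = 6" "dim_col Q2 = 6" "dim_row Q3 = 6" "dim_col Q3 = 6"
  using carr by auto

lemma symQ: assumes "sym6 Q" "i < 6" "j < 6" shows "Q $$ (i,j) = Q $$ (j,i)"
proof -
  have t: "transpose_mat Q = Q" and c: "dim_row Q = 6" "dim_col Q = 6" using assms(1) by (auto simp: sym6_def)
  have "transpose_mat Q $$ (i,j) = Q $$ (j,i)" using index_transpose_mat(1)[of i Q j] c assms(2,3) by simp
  then show ?thesis using t by simp
qed

lemma Qsym: "i < 6 \<Longrightarrow> j < 6 \<Longrightarrow> Q1 $$ (i,j) = Q1 $$ (j,i)" "i < 6 \<Longrightarrow> j < 6 \<Longrightarrow> Q2 $$ (i,j) = Q2 $$ (j,i)"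
  "i < 6 \<Longrightarrow> j < 6 \<Longrightarrow> Q3 $$ (i,j) = Q3 $$ (j,i)"
  using symQ[OF s1] symQ[OF s2] symQ[OF s3] by blast+

lemma Aw_dims[simp]: "dim_row (Aw Q1 Q2 Q3 w) = 6" "dim_col (Aw Q1 Q2 Q3 w) = 6"
  unfolding Aw_def by (simp_all only: index_add_mat(2,3) index_smult_mat(2,3) dims)

lemma Aw_carrier: "Aw Q1 Q2 Q3 w \<in> carrier_mat 6 6"
  unfolding carrier_mat_def using Aw_dims by blast

lemma Aw_index: assumes "i < 6" "j < 6"
  shows "Aw Q1 Q2 Q3 w $$ (i,j) = w 0 * Q1 $$ (i,j) + w 1 * Q2 $$ (i,j) + w 2 * Q3 $$ (i,j)"
proof -
  have d: "i < dim_row Q1" "j < dim_col Q1" "i < dim_row Q2" "j < dim_col Q2" "i < dim_row Q3" "j < dim_col Q3"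
    "i < dim_row (w 2 \<cdot>\<^sub>m Q3)" "j < dim_col (w 2 \<cdot>\<^sub>m Q3)" "i < dim_row (w 1 \<cdot>\<^sub>m Q2)" "j < dim_col (w 1 \<cdot>\<^sub>m Q2)"
    using assms dims by simp_all
  have "(w 0 \<cdot>\<^sub>m Q1 + w 1 \<cdot>\<^sub>m Q2 + w 2 \<cdot>\<^sub>m Q3) $$ (i,j) = (w 0 \<cdot>\<^sub>m Q1 + w 1 \<cdot>\<^sub>m Q2) $$ (i,j) + (w 2 \<cdot>\<^sub>m Q3) $$ (i,j)"
    by (rule index_add_mat(1)[OF d(7,8)])
  also have "(w 0 \<cdot>\<^sub>m Q1 + w 1 \<cdot>\<^sub>m Q2) $$ (i,j) = (w 0 \<cdot>\<^sub>m Q1) $$ (i,j) + (w 1 \<cdot>\<^sub>m Q2) $$ (i,j)"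
    by (rule index_add_mat(1)[OF d(9,10)])
  finally show ?thesis unfolding Aw_def using index_smult_mat(1)[OF d(1,2)] index_smult_mat(1)[OF d(3,4)]
    index_smult_mat(1)[OF d(5,6)] by simp
qed

lemma Aw_sym: "sym6 (Aw Q1 Q2 Q3 w)"
  unfolding sym6_def
proof (intro conjI Aw_carrier eq_matI)
  fix i j assume "i < dim_row (Aw Q1 Q2 Q3 w)" "j < dim_col (Aw Q1 Q2 Q3 w)"
  then have ij: "i < 6" "j < 6" by auto
  have "transpose_mat (Aw Q1 Q2 Q3 w) $$ (i, j) = Aw Q1 Q2 Q3 w $$ (j, i)"
    using ij by simp
  also have "\<dots> = Aw Q1 Q2 Q3 w $$ (i, j)"
    unfolding Aw_index[OF ij(2,1)] Aw_index[OF ij] using Qsym[OF ij] by simp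
  finally show "transpose_mat (Aw Q1 Q2 Q3 w) $$ (i, j) = Aw Q1 Q2 Q3 w $$ (i, j)" .
qed simp_all

lemma BB_Aw: assumes M: "M \<in> carrier_mat 6 6" and pq: "p < 6" "q < 6"
  shows "BB M (Aw Q1 Q2 Q3 w) $$ (p,q) = w 0 * BB M Q1 $$ (p,q) + w 1 * BB M Q2 $$ (p,q) + w 2 * BB M Q3 $$ (p,q)"
proof -
  have "BB M (Aw Q1 Q2 Q3 w) $$ (p,q) = (\<Sum>i\<in>{0..<6}. M $$ (i,p) * (\<Sum>k\<in>{0..<6}.
      (w 0 * Q1 $$ (i,k) + w 1 * Q2 $$ (i,k) + w 2 * Q3 $$ (i,k)) * M $$ (k,q)))"
    using BB_entry[OF M Aw_carrier pq] by (simp add: Aw_index)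
  also have "\<dots> = w 0 * (\<Sum>i\<in>{0..<6}. M $$ (i,p) * (\<Sum>k\<in>{0..<6}. Q1 $$ (i,k) * M $$ (k,q)))
     + w 1 * (\<Sum>i\<in>{0..<6}. M $$ (i,p) * (\<Sum>k\<in>{0..<6}. Q2 $$ (i,k) * M $$ (k,q)))
     + w 2 * (\<Sum>i\<in>{0..<6}. M $$ (i,p) * (\<Sum>k\<in>{0..<6}. Q3 $$ (i,k) * M $$ (k,q)))"
    by (simp add: sum_distrib_left sum.distrib algebra_simps)
  finally show ?thesis using BB_entry[OF M carr(1) pq] BB_entry[OF M carr(2) pq] BB_entry[OF M carr(3) pq]
    by simp
qed

lemma qcoeff_Aw: assumes M: "M \<in> carrier_mat 6 6" and m: "m \<in> monomials"
  shows "qcoeff M (Aw Q1 Q2 Q3 w) m = dot w (gcol M Q1 Q2 Q3 m)"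
proof -
  obtain p q where pq: "m = (p,q)" "p \<le> q" "q < 6" using mono_cases[OF m] by blast
  then have "p < 6" by auto
  then show ?thesis using pq BB_Aw[OF M \<open>p < 6\<close> \<open>q < 6\<close>]
    by (simp add: qcoeff_BB gcol_def dot_def algebra_simps numeral_2_eq_2)
qed


lemma Aw_zero_iff: "Aw Q1 Q2 Q3 w = 0\<^sub>m 6 6 \<longleftrightarrow> \<not> nz w"
proof
  assume "Aw Q1 Q2 Q3 w = 0\<^sub>m 6 6"
  then have "w 0 = 0 \<and> w 1 = 0 \<and> w 2 = 0" using ind unfolding indep3_def Aw_def by blast
  then show "\<not> nz w" by (simp add: nz_def)
next
  assume "\<not> nz w"
  then have z: "w 0 = 0" "w 1 = 0" "w 2 = 0" by (auto simp: nz_def)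
  show "Aw Q1 Q2 Q3 w = 0\<^sub>m 6 6"
  proof (rule eq_matI)
    fix i j assume "i < dim_row (0\<^sub>m 6 6 :: complex mat)" "j < dim_col (0\<^sub>m 6 6 :: complex mat)"
    then have ij: "i < 6" "j < 6" by auto
    show "Aw Q1 Q2 Q3 w $$ (i, j) = 0\<^sub>m 6 6 $$ (i, j)" using Aw_index[OF ij, of w] z ij by simp
  qed simp_all
qed

lemma span3_iff: "A \<in> span3 Q1 Q2 Q3 \<longleftrightarrow> (\<exists>w. A = Aw Q1 Q2 Q3 w)"
proof
  assume "A \<in> span3 Q1 Q2 Q3"
  then obtain a b c where A: "A = a \<cdot>\<^sub>m Q1 + b \<cdot>\<^sub>m Q2 + c \<cdot>\<^sub>m Q3" unfolding span3_def by blast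
  let ?w = "\<lambda>i::nat. if i = 0 then a else if i = 1 then b else c"
  have "A = Aw Q1 Q2 Q3 ?w" unfolding A Aw_def by simp
  then show "\<exists>w. A = Aw Q1 Q2 Q3 w" by blast
next
  assume "\<exists>w. A = Aw Q1 Q2 Q3 w"
  then show "A \<in> span3 Q1 Q2 Q3" unfolding span3_def Aw_def by blast
qed

lemma Aw_lc: "a \<cdot>\<^sub>m Aw Q1 Q2 Q3 w + b \<cdot>\<^sub>m Aw Q1 Q2 Q3 w' = Aw Q1 Q2 Q3 (lc a w b w')"
proof (rule eq_matI)
  fix i j assume "i < dim_row (Aw Q1 Q2 Q3 (lc a w b w'))" "j < dim_col (Aw Q1 Q2 Q3 (lc a w b w'))"
  then have ij: "i < 6" "j < 6" by auto
  have "(a \<cdot>\<^sub>m Aw Q1 Q2 Q3 w + b \<cdot>\<^sub>m Aw Q1 Q2 Q3 w') $$ (i,j) = a * Aw Q1 Q2 Q3 w $$ (i,j) + b * Aw Q1 Q2 Q3 w' $$ (i,j)"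
    using ij by simp
  then show "(a \<cdot>\<^sub>m Aw Q1 Q2 Q3 w + b \<cdot>\<^sub>m Aw Q1 Q2 Q3 w') $$ (i,j) = Aw Q1 Q2 Q3 (lc a w b w') $$ (i,j)"
    unfolding Aw_index[OF ij] by (simp add: lc_def algebra_simps)
qed simp_all

lemma full: assumes M: "M \<in> carrier_mat 6 6" and I: "invertible_mat M"
  shows "Full (gcol M Q1 Q2 Q3) monomials"
  unfolding Full_def
proof (intro allI impI notI)
  fix n assume n: "nz n" and a: "ann (gcol M Q1 Q2 Q3) n monomials"
  have "\<forall>m\<in>monomials. qcoeff M (Aw Q1 Q2 Q3 n) m = 0"
    using a qcoeff_Aw[OF M] unfolding ann_def by simp
  then have "Aw Q1 Q2 Q3 n = 0\<^sub>m 6 6" using zero_from_coeffs[OF Aw_sym M I] by blast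
  then show False using n Aw_zero_iff by blast
qed

lemma cC: assumes M: "M \<in> carrier_mat 6 6" and j: "j < 6"
  shows "contains (Aw Q1 Q2 Q3 w) (flagsp M j) \<longleftrightarrow> ann (gcol M Q1 Q2 Q3) w {m\<in>monomials. snd m \<le> j}"
  unfolding contains_iff[OF Aw_sym M j] ann_def using qcoeff_Aw[OF M] by auto

lemma cS: assumes M: "M \<in> carrier_mat 6 6" and I: "invertible_mat M"
  shows "sing_along (Aw Q1 Q2 Q3 w) (flagsp M j) \<longleftrightarrow> ann (gcol M Q1 Q2 Q3) w {m\<in>monomials. fst m \<le> j}"
  unfolding sing_iff[OF Aw_sym M I] ann_def using qcoeff_Aw[OF M] by auto


lemma lc10: "lc 1 w 0 w' = w" and lc01: "lc 0 w 1 w' = w'"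
  by (simp_all add: lc_def)

lemma ann_lc: "ann G n S \<Longrightarrow> ann G n' S \<Longrightarrow> ann G (lc a n b n') S"
  by (simp add: ann_def dot_lc)

lemma elem_span3: "elem A (span3 Q1 Q2 Q3) \<longleftrightarrow> (\<exists>w. nz w \<and> A = Aw Q1 Q2 Q3 w)"
proof
  assume "elem A (span3 Q1 Q2 Q3)"
  then obtain w where "A = Aw Q1 Q2 Q3 w" "A \<noteq> 0\<^sub>m 6 6" unfolding elem_def span3_iff by blast
  then show "\<exists>w. nz w \<and> A = Aw Q1 Q2 Q3 w" using Aw_zero_iff[of w] by auto
next
  assume "\<exists>w. nz w \<and> A = Aw Q1 Q2 Q3 w"
  then obtain w where "nz w" "A = Aw Q1 Q2 Q3 w" by blast
  then show "elem A (span3 Q1 Q2 Q3)" unfolding elem_def span3_iff using Aw_zero_iff[of w] by auto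
qed

lemma T_elem: assumes hc: "\<And>w. cond (Aw Q1 Q2 Q3 w) \<longleftrightarrow> ann G w S"
  shows "(\<exists>A. elem A (span3 Q1 Q2 Q3) \<and> cond A) \<longleftrightarrow> ExV G S"
proof
  assume "\<exists>A. elem A (span3 Q1 Q2 Q3) \<and> cond A"
  then obtain A w where "nz w" "A = Aw Q1 Q2 Q3 w" "cond A" unfolding elem_span3 by blast
  then show "ExV G S" unfolding ExV_def using hc[of w] by auto
next
  assume "ExV G S"
  then obtain w where "nz w" "ann G w S" unfolding ExV_def by blast
  then show "\<exists>A. elem A (span3 Q1 Q2 Q3) \<and> cond A" unfolding elem_span3 using hc[of w] by auto
qed

lemma T_all: assumes hc: "\<And>w. cond (Aw Q1 Q2 Q3 w) \<longleftrightarrow> ann G w S"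
  shows "(\<forall>A\<in>span3 Q1 Q2 Q3. cond A) \<longleftrightarrow> Zr G S"
proof
  assume H: "\<forall>A\<in>span3 Q1 Q2 Q3. cond A"
  have a: "ann G w S" for w
  proof -
    have "Aw Q1 Q2 Q3 w \<in> span3 Q1 Q2 Q3" unfolding span3_iff by blast
    then have "cond (Aw Q1 Q2 Q3 w)" using H by blast
    then show ?thesis using hc[of w] by simp
  qed
  show "Zr G S" unfolding Zr_def
  proof
    fix m assume m: "m \<in> S"
    have d: "dot (ev k) (G m) = 0" for k using a[of "ev k"] m unfolding ann_def by blast
    have "G m 0 = 0" using d[of 0] by (simp add: dot_def ev_def)
    moreover have "G m 1 = 0" using d[of 1] by (simp add: dot_def ev_def)
    moreover have "G m 2 = 0" using d[of 2] by (simp add: dot_def ev_def)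
    ultimately show "\<not> nz (G m)" by (simp add: nz_def)
  qed
next
  assume Z: "Zr G S"
  have a: "ann G w S" for w unfolding ann_def using Z unfolding Zr_def by (auto simp: nz_def dot_def)
  show "\<forall>A\<in>span3 Q1 Q2 Q3. cond A"
  proof
    fix A assume "A \<in> span3 Q1 Q2 Q3"
    then obtain w where "A = Aw Q1 Q2 Q3 w" unfolding span3_iff by blast
    then show "cond A" using hc[of w] a[of w] by simp
  qed
qed

lemma sp2: "span2 (Aw Q1 Q2 Q3 w) (Aw Q1 Q2 Q3 w') = {Aw Q1 Q2 Q3 (lc a w b w') | a b. True}"
  unfolding span2_def Aw_lc by blast

lemma ind2: "(\<forall>a b. a \<cdot>\<^sub>m Aw Q1 Q2 Q3 w + b \<cdot>\<^sub>m Aw Q1 Q2 Q3 w' = 0\<^sub>m 6 6 \<longrightarrow> a = 0 \<and> b = 0)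
      \<longleftrightarrow> nz (cross w w')"
  unfolding Aw_lc Aw_zero_iff indep_iff ..

lemma pencil_iff: "pencil_in (span3 Q1 Q2 Q3) P \<longleftrightarrow>
   (\<exists>w w'. nz (cross w w') \<and> P = {Aw Q1 Q2 Q3 (lc a w b w') | a b. True})"
proof
  assume "pencil_in (span3 Q1 Q2 Q3) P"
  then obtain P1 P2 where P: "P1 \<in> span3 Q1 Q2 Q3" "P2 \<in> span3 Q1 Q2 Q3"
    "\<forall>a b. a \<cdot>\<^sub>m P1 + b \<cdot>\<^sub>m P2 = 0\<^sub>m 6 6 \<longrightarrow> a = 0 \<and> b = 0" "P = span2 P1 P2"
    unfolding pencil_in_def by blast
  obtain w where w: "P1 = Aw Q1 Q2 Q3 w" using P(1) unfolding span3_iff by blast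
  obtain w' where w': "P2 = Aw Q1 Q2 Q3 w'" using P(2) unfolding span3_iff by blast
  have "nz (cross w w')" using P(3) unfolding w w' ind2 .
  moreover have "P = {Aw Q1 Q2 Q3 (lc a w b w') | a b. True}" using P(4) unfolding w w' sp2 .
  ultimately show "\<exists>w w'. nz (cross w w') \<and> P = {Aw Q1 Q2 Q3 (lc a w b w') | a b. True}" by blast
next
  assume "\<exists>w w'. nz (cross w w') \<and> P = {Aw Q1 Q2 Q3 (lc a w b w') | a b. True}"
  then obtain w w' where w: "nz (cross w w')" "P = {Aw Q1 Q2 Q3 (lc a w b w') | a b. True}" by blast
  have m: "Aw Q1 Q2 Q3 w \<in> span3 Q1 Q2 Q3" "Aw Q1 Q2 Q3 w' \<in> span3 Q1 Q2 Q3" unfolding span3_iff by blast+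
  have i: "\<forall>a b. a \<cdot>\<^sub>m Aw Q1 Q2 Q3 w + b \<cdot>\<^sub>m Aw Q1 Q2 Q3 w' = 0\<^sub>m 6 6 \<longrightarrow> a = 0 \<and> b = 0"
    unfolding ind2 by (rule w(1))
  have p: "P = span2 (Aw Q1 Q2 Q3 w) (Aw Q1 Q2 Q3 w')" unfolding sp2 by (rule w(2))
  show "pencil_in (span3 Q1 Q2 Q3) P" unfolding pencil_in_def
    by (rule exI[of _ "Aw Q1 Q2 Q3 w"], rule exI[of _ "Aw Q1 Q2 Q3 w'"]) (use m i p in simp)
qed

lemma all_lc: assumes hc: "\<And>w. cond (Aw Q1 Q2 Q3 w) \<longleftrightarrow> ann G w S"
  shows "(\<forall>A\<in>{Aw Q1 Q2 Q3 (lc a w b w') | a b. True}. cond A) \<longleftrightarrow> ann G w S \<and> ann G w' S"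
proof
  assume H: "\<forall>A\<in>{Aw Q1 Q2 Q3 (lc a w b w') | a b. True}. cond A"
  have "Aw Q1 Q2 Q3 (lc 1 w 0 w') \<in> {Aw Q1 Q2 Q3 (lc a w b w') | a b. True}" by blast
  then have "cond (Aw Q1 Q2 Q3 w)" using H unfolding lc10 by blast
  moreover have "Aw Q1 Q2 Q3 (lc 0 w 1 w') \<in> {Aw Q1 Q2 Q3 (lc a w b w') | a b. True}" by blast
  then have "cond (Aw Q1 Q2 Q3 w')" using H unfolding lc01 by blast
  ultimately show "ann G w S \<and> ann G w' S" using hc[of w] hc[of w'] by simp
next
  assume a: "ann G w S \<and> ann G w' S"
  show "\<forall>A\<in>{Aw Q1 Q2 Q3 (lc a w b w') | a b. True}. cond A"
  proof
    fix A assume "A \<in> {Aw Q1 Q2 Q3 (lc a w b w') | a b. True}"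
    then obtain a b where A: "A = Aw Q1 Q2 Q3 (lc a w b w')" by blast
    have "ann G (lc a w b w') S" using a ann_lc by blast
    then show "cond A" using hc[of "lc a w b w'"] A by simp
  qed
qed

lemma T_pen: assumes hc: "\<And>w. cond (Aw Q1 Q2 Q3 w) \<longleftrightarrow> ann G w S"
  shows "(\<exists>P. pencil_in (span3 Q1 Q2 Q3) P \<and> (\<forall>A\<in>P. cond A)) \<longleftrightarrow> Pen G S"
proof
  assume "\<exists>P. pencil_in (span3 Q1 Q2 Q3) P \<and> (\<forall>A\<in>P. cond A)"
  then obtain P w w' where P: "nz (cross w w')" "P = {Aw Q1 Q2 Q3 (lc a w b w') | a b. True}" "\<forall>A\<in>P. cond A"
    unfolding pencil_iff by blast
  have "ann G w S \<and> ann G w' S" using P(3) unfolding P(2) all_lc[OF hc] .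
  then show "Pen G S" unfolding Pen_def using P(1) by blast
next
  assume "Pen G S"
  then obtain w w' where w: "nz (cross w w')" "ann G w S" "ann G w' S" unfolding Pen_def by blast
  let ?P = "{Aw Q1 Q2 Q3 (lc a w b w') | a b. True}"
  have "pencil_in (span3 Q1 Q2 Q3) ?P" unfolding pencil_iff using w(1) by blast
  moreover have "\<forall>A\<in>?P. cond A" unfolding all_lc[OF hc] using w(2,3) by blast
  ultimately show "\<exists>P. pencil_in (span3 Q1 Q2 Q3) P \<and> (\<forall>A\<in>P. cond A)" by blast
qed

lemma elem_lc: "elem A {Aw Q1 Q2 Q3 (lc a w b w') | a b. True} \<longleftrightarrow>
   (\<exists>a b. nz (lc a w b w') \<and> A = Aw Q1 Q2 Q3 (lc a w b w'))"
proof
  assume "elem A {Aw Q1 Q2 Q3 (lc a w b w') | a b. True}"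
  then obtain a b where "A = Aw Q1 Q2 Q3 (lc a w b w')" "A \<noteq> 0\<^sub>m 6 6" unfolding elem_def by blast
  then show "\<exists>a b. nz (lc a w b w') \<and> A = Aw Q1 Q2 Q3 (lc a w b w')" using Aw_zero_iff[of "lc a w b w'"] by auto
next
  assume "\<exists>a b. nz (lc a w b w') \<and> A = Aw Q1 Q2 Q3 (lc a w b w')"
  then obtain a b where "nz (lc a w b w')" "A = Aw Q1 Q2 Q3 (lc a w b w')" by blast
  then show "elem A {Aw Q1 Q2 Q3 (lc a w b w') | a b. True}" unfolding elem_def using Aw_zero_iff[of "lc a w b w'"] by auto
qed

lemma T_pen3: assumes hc1: "\<And>w. c1 (Aw Q1 Q2 Q3 w) \<longleftrightarrow> ann G w S"
  and hc2: "\<And>w. c2 (Aw Q1 Q2 Q3 w) \<longleftrightarrow> ann G w T"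
  shows "(\<exists>P. pencil_in (span3 Q1 Q2 Q3) P \<and> (\<forall>A\<in>P. c1 A) \<and> (\<exists>A. elem A P \<and> c2 A)) \<longleftrightarrow> Pen3 G S T"
proof
  assume "\<exists>P. pencil_in (span3 Q1 Q2 Q3) P \<and> (\<forall>A\<in>P. c1 A) \<and> (\<exists>A. elem A P \<and> c2 A)"
  then obtain P w w' A where P: "nz (cross w w')" "P = {Aw Q1 Q2 Q3 (lc a w b w') | a b. True}" "\<forall>A\<in>P. c1 A"
    "elem A P" "c2 A"
    unfolding pencil_iff by blast
  have "ann G w S \<and> ann G w' S" using P(3) unfolding P(2) all_lc[OF hc1] .
  moreover obtain a b where ab: "nz (lc a w b w')" "A = Aw Q1 Q2 Q3 (lc a w b w')"
    using P(4) unfolding P(2) elem_lc by blast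
  moreover have "ann G (lc a w b w') T" using P(5) hc2[of "lc a w b w'"] ab(2) by simp
  ultimately show "Pen3 G S T" unfolding Pen3_def using P(1) ab(1) by blast
next
  assume "Pen3 G S T"
  then obtain w w' a b where w: "nz (cross w w')" "ann G w S" "ann G w' S" "nz (lc a w b w')"
    "ann G (lc a w b w') T" unfolding Pen3_def by blast
  let ?P = "{Aw Q1 Q2 Q3 (lc a w b w') | a b. True}"
  have "pencil_in (span3 Q1 Q2 Q3) ?P" unfolding pencil_iff using w(1) by blast
  moreover have "\<forall>A\<in>?P. c1 A" unfolding all_lc[OF hc1] using w(2,3) by blast
  moreover have "elem (Aw Q1 Q2 Q3 (lc a w b w')) ?P" unfolding elem_lc using w(4) by blast
  moreover have "c2 (Aw Q1 Q2 Q3 (lc a w b w'))" using hc2[of "lc a w b w'"] w(5) by simp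
  ultimately show "\<exists>P. pencil_in (span3 Q1 Q2 Q3) P \<and> (\<forall>A\<in>P. c1 A) \<and> (\<exists>A. elem A P \<and> c2 A)" by blast
qed

end


context net begin

abbreviation "G M \<equiv> gcol M Q1 Q2 Q3"

lemma rho1: assumes M: "M \<in> carrier_mat 6 6" and I: "invertible_mat M"
  shows "\<not> stable_wrt [1,1,1,1,1,-5] M Q1 Q2 Q3 \<longleftrightarrow> (\<exists>A. elem A (span3 Q1 Q2 Q3) \<and> contains A (flagsp M 4))"
proof -
  let ?w = "mweight [1,1,1,1,1,-5]"
  have W: "\<forall>m\<in>monomials. ?w m = 2 \<or> ?w m = -4 \<or> ?w m = -10" using w1 by simp
  have S: "{m\<in>monomials. ?w m = 2} = {m\<in>monomials. snd m \<le> 4}" using w1 by (auto split: if_splits)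
  have "\<not> stable_wrt [1,1,1,1,1,-5] M Q1 Q2 Q3 \<longleftrightarrow> ExV (G M) {m\<in>monomials. snd m \<le> 4}"
    unfolding notstable_NS case1[OF W] S ..
  also have "\<dots> \<longleftrightarrow> (\<exists>A. elem A (span3 Q1 Q2 Q3) \<and> contains A (flagsp M 4))"
    by (rule T_elem[symmetric]) (rule cC[OF M], simp)
  finally show ?thesis .
qed

lemma rho2: assumes M: "M \<in> carrier_mat 6 6" and I: "invertible_mat M"
  shows "\<not> stable_wrt [1,1,1,1,-2,-2] M Q1 Q2 Q3 \<longleftrightarrow>
    (\<exists>P. pencil_in (span3 Q1 Q2 Q3) P \<and> (\<forall>A\<in>P. contains A (flagsp M 3)))
     \<or> (\<exists>A. elem A (span3 Q1 Q2 Q3) \<and> sing_along A (flagsp M 3))"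
proof -
  let ?w = "mweight [1,1,1,1,-2,-2]"
  have W: "\<forall>m\<in>monomials. ?w m = 2 \<or> ?w m = -1 \<or> ?w m = -4" using w2 by simp
  have S: "{m\<in>monomials. ?w m = 2} = {m\<in>monomials. snd m \<le> 3}" using w2 by (auto split: if_splits)
  have T: "{m\<in>monomials. -1 \<le> ?w m} = {m\<in>monomials. fst m \<le> 3}"
    using w2 mono_cases by (fastforce split: if_splits)
  have "\<not> stable_wrt [1,1,1,1,-2,-2] M Q1 Q2 Q3 \<longleftrightarrow>
      Pen (G M) {m\<in>monomials. snd m \<le> 3} \<or> ExV (G M) {m\<in>monomials. fst m \<le> 3}"
    unfolding notstable_NS case2[OF W] S T ..
  also have "\<dots> \<longleftrightarrow> (\<exists>P. pencil_in (span3 Q1 Q2 Q3) P \<and> (\<forall>A\<in>P. contains A (flagsp M 3)))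
     \<or> (\<exists>A. elem A (span3 Q1 Q2 Q3) \<and> sing_along A (flagsp M 3))"
  proof -
    have 1: "(\<exists>P. pencil_in (span3 Q1 Q2 Q3) P \<and> (\<forall>A\<in>P. contains A (flagsp M 3))) \<longleftrightarrow> Pen (G M) {m\<in>monomials. snd m \<le> 3}"
      by (rule T_pen) (rule cC[OF M], simp)
    have 2: "(\<exists>A. elem A (span3 Q1 Q2 Q3) \<and> sing_along A (flagsp M 3)) \<longleftrightarrow> ExV (G M) {m\<in>monomials. fst m \<le> 3}"
      by (rule T_elem) (rule cS[OF M I])
    show ?thesis unfolding 1 2 ..
  qed
  finally show ?thesis .
qed

lemma rho3: assumes M: "M \<in> carrier_mat 6 6" and I: "invertible_mat M"
  shows "\<not> stable_wrt [1,1,1,-1,-1,-1] M Q1 Q2 Q3 \<longleftrightarrow>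
    (\<forall>A\<in>span3 Q1 Q2 Q3. contains A (flagsp M 2))
     \<or> (\<exists>P. pencil_in (span3 Q1 Q2 Q3) P \<and> (\<forall>A\<in>P. contains A (flagsp M 2))
           \<and> (\<exists>A. elem A P \<and> sing_along A (flagsp M 2)))"
proof -
  let ?w = "mweight [1,1,1,-1,-1,-1]"
  have W: "\<forall>m\<in>monomials. ?w m = 2 \<or> ?w m = 0 \<or> ?w m = -2" using w3 by simp
  have S: "{m\<in>monomials. ?w m = 2} = {m\<in>monomials. snd m \<le> 2}" using w3 by (auto split: if_splits)
  have T: "{m\<in>monomials. 0 \<le> ?w m} = {m\<in>monomials. fst m \<le> 2}"
    using w3 mono_cases by (fastforce split: if_splits)
  have "\<not> stable_wrt [1,1,1,-1,-1,-1] M Q1 Q2 Q3 \<longleftrightarrow>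
      Zr (G M) {m\<in>monomials. snd m \<le> 2} \<or> Pen3 (G M) {m\<in>monomials. snd m \<le> 2} {m\<in>monomials. fst m \<le> 2}"
    unfolding notstable_NS case3[OF W full[OF M I]] S T ..
  also have "\<dots> \<longleftrightarrow> (\<forall>A\<in>span3 Q1 Q2 Q3. contains A (flagsp M 2))
     \<or> (\<exists>P. pencil_in (span3 Q1 Q2 Q3) P \<and> (\<forall>A\<in>P. contains A (flagsp M 2))
           \<and> (\<exists>A. elem A P \<and> sing_along A (flagsp M 2)))"
  proof -
    have 1: "(\<forall>A\<in>span3 Q1 Q2 Q3. contains A (flagsp M 2)) \<longleftrightarrow> Zr (G M) {m\<in>monomials. snd m \<le> 2}"
      by (rule T_all) (rule cC[OF M], simp)
    have 2: "(\<exists>P. pencil_in (span3 Q1 Q2 Q3) P \<and> (\<forall>A\<in>P. contains A (flagsp M 2))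
           \<and> (\<exists>A. elem A P \<and> sing_along A (flagsp M 2))) \<longleftrightarrow> Pen3 (G M) {m\<in>monomials. snd m \<le> 2} {m\<in>monomials. fst m \<le> 2}"
      by (rule T_pen3) (rule cC[OF M], simp, rule cS[OF M I])
    show ?thesis unfolding 1 2 ..
  qed
  finally show ?thesis .
qed

lemma rho4: assumes M: "M \<in> carrier_mat 6 6" and I: "invertible_mat M"
  shows "\<not> stable_wrt [2,2,-1,-1,-1,-1] M Q1 Q2 Q3 \<longleftrightarrow>
    ((\<forall>A\<in>span3 Q1 Q2 Q3. contains A (flagsp M 1)) \<and> (\<exists>A. elem A (span3 Q1 Q2 Q3) \<and> sing_along A (flagsp M 1)))
     \<or> (\<exists>P. pencil_in (span3 Q1 Q2 Q3) P \<and> (\<forall>A\<in>P. sing_along A (flagsp M 1)))"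
proof -
  let ?w = "mweight [2,2,-1,-1,-1,-1]"
  have W: "\<forall>m\<in>monomials. ?w m = 4 \<or> ?w m = 1 \<or> ?w m = -2" using w4 by simp
  have S: "{m\<in>monomials. ?w m = 4} = {m\<in>monomials. snd m \<le> 1}" using w4 by (auto split: if_splits)
  have T: "{m\<in>monomials. 1 \<le> ?w m} = {m\<in>monomials. fst m \<le> 1}"
    using w4 mono_cases by (fastforce split: if_splits)
  have "\<not> stable_wrt [2,2,-1,-1,-1,-1] M Q1 Q2 Q3 \<longleftrightarrow>
      (Zr (G M) {m\<in>monomials. snd m \<le> 1} \<and> ExV (G M) {m\<in>monomials. fst m \<le> 1}) \<or> Pen (G M) {m\<in>monomials. fst m \<le> 1}"
    unfolding notstable_NS case4[OF W full[OF M I]] S T ..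
  also have "\<dots> \<longleftrightarrow> ((\<forall>A\<in>span3 Q1 Q2 Q3. contains A (flagsp M 1)) \<and> (\<exists>A. elem A (span3 Q1 Q2 Q3) \<and> sing_along A (flagsp M 1)))
     \<or> (\<exists>P. pencil_in (span3 Q1 Q2 Q3) P \<and> (\<forall>A\<in>P. sing_along A (flagsp M 1)))"
  proof -
    have 1: "(\<forall>A\<in>span3 Q1 Q2 Q3. contains A (flagsp M 1)) \<longleftrightarrow> Zr (G M) {m\<in>monomials. snd m \<le> 1}"
      by (rule T_all) (rule cC[OF M], simp)
    have 2: "(\<exists>A. elem A (span3 Q1 Q2 Q3) \<and> sing_along A (flagsp M 1)) \<longleftrightarrow> ExV (G M) {m\<in>monomials. fst m \<le> 1}"
      by (rule T_elem) (rule cS[OF M I])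
    have 3: "(\<exists>P. pencil_in (span3 Q1 Q2 Q3) P \<and> (\<forall>A\<in>P. sing_along A (flagsp M 1))) \<longleftrightarrow> Pen (G M) {m\<in>monomials. fst m \<le> 1}"
      by (rule T_pen) (rule cS[OF M I])
    show ?thesis unfolding 1 2 3 ..
  qed
  finally show ?thesis .
qed

lemma rho5: assumes M: "M \<in> carrier_mat 6 6" and I: "invertible_mat M"
  shows "\<not> stable_wrt [5,-1,-1,-1,-1,-1] M Q1 Q2 Q3 \<longleftrightarrow>
    (\<forall>A\<in>span3 Q1 Q2 Q3. contains A (flagsp M 0))
     \<and> (\<exists>P. pencil_in (span3 Q1 Q2 Q3) P \<and> (\<forall>A\<in>P. sing_along A (flagsp M 0)))"
proof -
  let ?w = "mweight [5,-1,-1,-1,-1,-1]"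
  have W: "\<forall>m\<in>monomials. ?w m = 10 \<or> ?w m = 4 \<or> ?w m = -2" using w5 by simp
  have S: "{m\<in>monomials. ?w m = 10} = {m\<in>monomials. snd m \<le> 0}" using w5 by (auto split: if_splits)
  have T: "{m\<in>monomials. 4 \<le> ?w m} = {m\<in>monomials. fst m \<le> 0}"
    using w5 mono_cases by (fastforce split: if_splits)
  have "\<not> stable_wrt [5,-1,-1,-1,-1,-1] M Q1 Q2 Q3 \<longleftrightarrow>
      Zr (G M) {m\<in>monomials. snd m \<le> 0} \<and> Pen (G M) {m\<in>monomials. fst m \<le> 0}"
    unfolding notstable_NS case5[OF W full[OF M I]] S T ..
  also have "\<dots> \<longleftrightarrow> (\<forall>A\<in>span3 Q1 Q2 Q3. contains A (flagsp M 0))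
     \<and> (\<exists>P. pencil_in (span3 Q1 Q2 Q3) P \<and> (\<forall>A\<in>P. sing_along A (flagsp M 0)))"
  proof -
    have 1: "(\<forall>A\<in>span3 Q1 Q2 Q3. contains A (flagsp M 0)) \<longleftrightarrow> Zr (G M) {m\<in>monomials. snd m \<le> 0}"
      by (rule T_all) (rule cC[OF M], simp)
    have 3: "(\<exists>P. pencil_in (span3 Q1 Q2 Q3) P \<and> (\<forall>A\<in>P. sing_along A (flagsp M 0))) \<longleftrightarrow> Pen (G M) {m\<in>monomials. fst m \<le> 0}"
      by (rule T_pen) (rule cS[OF M I])
    show ?thesis unfolding 1 3 ..
  qed
  finally show ?thesis .
qed

end

lemma ex_iff: "(\<And>M. M \<in> C \<Longrightarrow> P M \<Longrightarrow> (A M \<longleftrightarrow> B M)) \<Longrightarrow> (\<exists>M\<in>C. P M \<and> A M) \<longleftrightarrow> (\<exists>M\<in>C. P M \<and> B M)"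
  by blast

theorem lemma2p2:
  fixes Q1 Q2 Q3 :: "complex mat"
  assumes "sym6 Q1" and "sym6 Q2" and "sym6 Q3" and "indep3 Q1 Q2 Q3"
  defines "\<Lambda> \<equiv> span3 Q1 Q2 Q3"
  shows
   "(not_stable_some_1PS [1,1,1,1,1,-5] Q1 Q2 Q3 \<longleftrightarrow>
      has_flag (\<lambda>F. \<exists>A. elem A \<Lambda> \<and> contains A (F 4)))
  \<and> (not_stable_some_1PS [1,1,1,1,-2,-2] Q1 Q2 Q3 \<longleftrightarrow>
      has_flag (\<lambda>F. (\<exists>P. pencil_in \<Lambda> P \<and> (\<forall>A\<in>P. contains A (F 3)))
                   \<or> (\<exists>A. elem A \<Lambda> \<and> sing_along A (F 3))))
  \<and> (not_stable_some_1PS [1,1,1,-1,-1,-1] Q1 Q2 Q3 \<longleftrightarrow>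
      has_flag (\<lambda>F. (\<forall>A\<in>\<Lambda>. contains A (F 2))
                   \<or> (\<exists>P. pencil_in \<Lambda> P \<and> (\<forall>A\<in>P. contains A (F 2))
                         \<and> (\<exists>A. elem A P \<and> sing_along A (F 2)))))
  \<and> (not_stable_some_1PS [2,2,-1,-1,-1,-1] Q1 Q2 Q3 \<longleftrightarrow>
      has_flag (\<lambda>F. ((\<forall>A\<in>\<Lambda>. contains A (F 1)) \<and> (\<exists>A. elem A \<Lambda> \<and> sing_along A (F 1)))
                   \<or> (\<exists>P. pencil_in \<Lambda> P \<and> (\<forall>A\<in>P. sing_along A (F 1)))))
  \<and> (not_stable_some_1PS [5,-1,-1,-1,-1,-1] Q1 Q2 Q3 \<longleftrightarrow>
      has_flag (\<lambda>F. (\<forall>A\<in>\<Lambda>. contains A (F 0))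
                   \<and> (\<exists>P. pencil_in \<Lambda> P \<and> (\<forall>A\<in>P. sing_along A (F 0)))))"
proof -
  interpret net Q1 Q2 Q3 using assms(1-4) by (rule net.intro)
  show ?thesis unfolding \<Lambda>_def not_stable_some_1PS_def has_flag_def
    by (intro conjI; rule ex_iff) (erule (1) rho1 rho2 rho3 rho4 rho5)+
qed


end
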